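(* Let $\widehat{\Theta}$ and $\widehat{\Theta}'$ be local $\mathrm{Aut}(F_\infty)$ representations of the same type $\mathcal{L}\in\{A_r\ (r\in\mathbb{Z}_{\ge0}),B,C,D\}$. Then for every oriented link $L$ in $S^3$, $G_{\widehat{\Theta}}(L)\cong G_{\widehat{\Theta}'}(L)$. In particular, if $\tau\in\mathrm{Aut}(F_2)$ is such that the constant sequence $(\tau,\tau,\tau,\dots)$ defines a local $\mathrm{Aut}(F_\infty)$ representation $\widehat{\Theta}_{\tau}$ (a Wada-type representation) of type $\mathcal{L}$, then $G_{\widehat{\Theta}}(L)\cong G_{\widehat{\Theta}_{\tau}}(L)$ for every oriented link $L$.
   Context: $F_2$ is free on $a,b$; $F_n$ is free on $x_1,\dots,x_n$; $B_n$ has standard generators $\sigma_1,\dots,\sigma_{n-1}$ and acts on the right, writing $(x)\phi$. For a word $W$ in $a^{\pm1},b^{\pm1}$, $W(U,V)$ denotes substitution of $U$ for $a$, $V$ for $b$. For $\tau\in\mathrm{Aut}(F_2)$, $T^i(\tau)\in\mathrm{Aut}(F_n)$ fixes $x_j$ ($j\ne i,i+1$) and sends $x_i\mapsto\tau(a)(x_i,x_{i+1})$, $x_{i+1}\mapsto\tau(b)(x_i,x_{i+1})$. A sequence $(\tau_1,\dots,\tau_{n-1})$ in $\mathrm{Aut}(F_2)$ defines a local $\mathrm{Aut}(F_n)$ representation $\Theta_n$ if $\sigma_i\mapsto T^i(\tau_i)$ extends to a homomorphism $B_n\to\mathrm{Aut}(F_n)$. A local $\mathrm{Aut}(F_\infty)$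 representation $\widehat{\Theta}$ is a sequence $(\tau_1,\tau_2,\dots)$ such that for every $n$, $(\tau_1,\dots,\tau_{n-1})$ defines a local $\mathrm{Aut}(F_n)$ representation $\Theta_n$. For $\beta\in B_n$, $G_{\Theta_n}(\beta)=\langle x_1,\dots,x_n\mid (x_i)\Theta_n(\beta)=x_i,\ i=1,\dots,n\rangle$, and $G_{\widehat{\Theta}}(L):=G_{\Theta_n}(\beta)$ for any $n$ and any $\beta\in B_n$ whose closure is $L$ (for the types considered this is well defined up to isomorphism). Natural symmetries on quadruples $(A,B,C,D)$ of reduced words (with $\tau:a\mapsto A,b\mapsto B$, $\kappa:a\mapsto C,b\mapsto D$ automorphisms): Inverse gives the reduced words of $\tau^{-1}(a),\tau^{-1}(b),\kappa^{-1}(a),\kappa^{-1}(b)$; Swap gives $(D^{\sigma},C^{\sigma},B^{\sigma},A^{\sigma})$, $W^\sigma$ interchanging letters $a,b$; Backward gives the four words read backwards. Equivalence up to natural symmetries: related by a composition of these. Labelled list: type $A_r$ ($r\ge0$): $(a^{r}ba^{-r},a,a^{r}ba^{-r},a)$, $(a^{r}ba^{-r},a,a^{r}b^{-1}a^{-r},a^{-1})$, $(a^{r}b^{-1}a^{-r},a^{-1},a^{-r}b^{-1}a^{r},a^{-1})$; type $B$: $(b^{-1},a,b^{-1},a)$, $(b^{-1},a,b,a^{-1})$; type $C$: $(ab^{-1}a,a,ab^{-1}a,a)$, $(ab^{-1}a,a,aba,a^{-1})$, $(aba,a^{-1},aba,a^{-1})$; type $D$: $(a^{-1}b^{-1}a,b^{2}a,a^{-1}b^{-1}a,b^{2}a)$,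 $(aba^{-1},b^{2}a^{-1},a^{-1}b^{-1}a,b^{2}a)$, $(a^{-1}b^{-1}a,b^{2}a,a^{-1}ba,a^{-1}b^{2})$, $(aba^{-1},b^{2}a^{-1},a^{-1}ba,a^{-1}b^{2})$. A local $\mathrm{Aut}(F_\infty)$ representation $(\tau_1,\tau_2,\dots)$ is of type $\mathcal{L}$ if for every $i\ge1$ the quadruple of reduced words $(\tau_i(a),\tau_i(b),\tau_{i+1}(a),\tau_{i+1}(b))$ is equivalent up to natural symmetries to a listed quadruple of type $\mathcal{L}$. *)

theory Defs
  imports "HOL-Algebra.Group"
begin

text \<open>A letter is (generator index, sign); True = positive exponent.
  In F_2 the generator a has index 0 and b has index 1.
  In F_n the generators x_1, ..., x_n have indices 1, ..., n.\<close>

type_synonym letter = "nat \<times> bool"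
type_synonym word = "letter list"

definition inv_letter :: "letter \<Rightarrow> letter" where
  "inv_letter l = (fst l, \<not> snd l)"

definition inv_word :: "word \<Rightarrow> word" where
  "inv_word w = rev (map inv_letter w)"

text \<open>Free reduction (stack algorithm): the unique reduced word freely equal to w.\<close>
definition reduce :: "word \<Rightarrow> word" where
  "reduce w = foldr (\<lambda>x acc. case acc of [] \<Rightarrow> [x]
                 | y # ys \<Rightarrow> (if y = inv_letter x then ys else x # acc)) w []"

definition word_over :: "nat set \<Rightarrow> word \<Rightarrow> bool" where
  "word_over S w \<longleftrightarrow> (\<forall>l \<in> set w. fst l \<in> S)"

text \<open>Endomorphisms of a free group are given by the images of the generators
  (a function from generator indices to words); substitution applies them to words.\<close>
definition subst :: "(nat \<Rightarrow> word) \<Rightarrow> word \<Rightarrow> word" where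
  "subst f w = concat (map (\<lambda>l. if snd l then f (fst l) else inv_word (f (fst l))) w)"

text \<open>Right action composition: (x)(phi psi) = ((x)phi)psi.\<close>
definition rcomp :: "(nat \<Rightarrow> word) \<Rightarrow> (nat \<Rightarrow> word) \<Rightarrow> (nat \<Rightarrow> word)" where
  "rcomp \<phi> \<psi> = (\<lambda>j. subst \<psi> (\<phi> j))"

definition endo_id :: "nat \<Rightarrow> word" where
  "endo_id = (\<lambda>j. [(j, True)])"

definition endo_eq :: "nat \<Rightarrow> (nat \<Rightarrow> word) \<Rightarrow> (nat \<Rightarrow> word) \<Rightarrow> bool" where
  "endo_eq n \<phi> \<psi> \<longleftrightarrow> (\<forall>j \<in> {1..n}. reduce (\<phi> j) = reduce (\<psi> j))"

text \<open>An element tau of End(F_2) is given by the pair (tau(a), tau(b)).\<close>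
type_synonym endo2 = "word \<times> word"

definition endo2_fun :: "endo2 \<Rightarrow> nat \<Rightarrow> word" where
  "endo2_fun t = (\<lambda>k. if k = 0 then fst t else snd t)"

definition is_inverse2 :: "endo2 \<Rightarrow> endo2 \<Rightarrow> bool" where
  "is_inverse2 t g \<longleftrightarrow>
     word_over {0,1} (fst g) \<and> word_over {0,1} (snd g) \<and>
     (\<forall>k \<in> {0,1}. reduce (subst (endo2_fun g) (endo2_fun t k)) = [(k, True)]
                \<and> reduce (subst (endo2_fun t) (endo2_fun g k)) = [(k, True)])"

definition is_aut2 :: "endo2 \<Rightarrow> bool" where
  "is_aut2 t \<longleftrightarrow> word_over {0,1} (fst t) \<and> word_over {0,1} (snd t) \<and> (\<exists>g. is_inverse2 t g)"

definition inv2 :: "endo2 \<Rightarrow> endo2" where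
  "inv2 t = (SOME g. is_inverse2 t g)"

text \<open>T^i(tau) in Aut(F_n): x_i \<mapsto> tau(a)(x_i,x_{i+1}), x_{i+1} \<mapsto> tau(b)(x_i,x_{i+1}),
  other generators fixed.\<close>
definition Tloc :: "nat \<Rightarrow> endo2 \<Rightarrow> nat \<Rightarrow> word" where
  "Tloc i t = (\<lambda>j. if j = i then subst (\<lambda>k. [(i + k, True)]) (fst t)
                  else if j = i + 1 then subst (\<lambda>k. [(i + k, True)]) (snd t)
                  else [(j, True)])"

text \<open>(tau_1,...,tau_{n-1}) defines a local Aut(F_n) representation: each tau_i is in Aut(F_2)
  and the assignment sigma_i \<mapsto> T^i(tau_i) respects the defining relations of B_n
  (so that it extends to a homomorphism B_n \<rightarrow> Aut(F_n)).\<close>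
definition local_rep :: "nat \<Rightarrow> (nat \<Rightarrow> endo2) \<Rightarrow> bool" where
  "local_rep n \<tau> \<longleftrightarrow>
     (\<forall>i \<in> {1..<n}. is_aut2 (\<tau> i)) \<and>
     (\<forall>i \<in> {1..<n}. \<forall>j \<in> {1..<n}. i + 2 \<le> j \<longrightarrow>
        endo_eq n (rcomp (Tloc i (\<tau> i)) (Tloc j (\<tau> j)))
                  (rcomp (Tloc j (\<tau> j)) (Tloc i (\<tau> i)))) \<and>
     (\<forall>i \<in> {1..<n}. i + 1 < n \<longrightarrow>
        endo_eq n (rcomp (rcomp (Tloc i (\<tau> i)) (Tloc (i+1) (\<tau> (i+1)))) (Tloc i (\<tau> i)))
                  (rcomp (rcomp (Tloc (i+1) (\<tau> (i+1))) (Tloc i (\<tau> i))) (Tloc (i+1) (\<tau> (i+1)))))"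

text \<open>Local Aut(F_infinity) representation (tau_1, tau_2, ...); index 0 is unused.\<close>
definition local_rep_inf :: "(nat \<Rightarrow> endo2) \<Rightarrow> bool" where
  "local_rep_inf \<tau> \<longleftrightarrow> (\<forall>n. local_rep n \<tau>)"

text \<open>A braid word in B_n: a list of (i, sign) meaning sigma_i^{\<plusminus>1}, 1 \<le> i \<le> n-1.\<close>
definition braid_word :: "nat \<Rightarrow> (nat \<times> bool) list \<Rightarrow> bool" where
  "braid_word n \<beta> \<longleftrightarrow> (\<forall>s \<in> set \<beta>. 1 \<le> fst s \<and> fst s < n)"

definition gen_img :: "(nat \<Rightarrow> endo2) \<Rightarrow> nat \<times> bool \<Rightarrow> nat \<Rightarrow> word" where
  "gen_img \<tau> s = (if snd s then Tloc (fst s) (\<tau> (fst s)) else Tloc (fst s) (inv2 (\<tau> (fst s))))"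

text \<open>Theta_n(beta), with the right action: (x)Theta(s beta) = ((x)Theta(s))Theta(beta).\<close>
fun Theta :: "(nat \<Rightarrow> endo2) \<Rightarrow> (nat \<times> bool) list \<Rightarrow> nat \<Rightarrow> word" where
  "Theta \<tau> [] = endo_id"
| "Theta \<tau> (s # \<beta>) = rcomp (gen_img \<tau> s) (Theta \<tau> \<beta>)"

inductive pres_eq :: "nat set \<Rightarrow> word set \<Rightarrow> word \<Rightarrow> word \<Rightarrow> bool" for S R where
  refl: "pres_eq S R w w"
| sym: "pres_eq S R u v \<Longrightarrow> pres_eq S R v u"
| trans: "pres_eq S R u v \<Longrightarrow> pres_eq S R v w \<Longrightarrow> pres_eq S R u w"
| cancel: "fst x \<in> S \<Longrightarrow> pres_eq S R (u @ [x, inv_letter x] @ v) (u @ v)"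
| rel: "r \<in> R \<Longrightarrow> pres_eq S R (u @ r @ v) (u @ v)"

definition presented_group :: "nat set \<Rightarrow> word set \<Rightarrow> word set monoid" where
  "presented_group S R =
     \<lparr>carrier = (\<lambda>w. {v. pres_eq S R w v}) ` {w. word_over S w},
      monoid.mult = (\<lambda>A B. {v. \<exists>a\<in>A. \<exists>b\<in>B. pres_eq S R (a @ b) v}),
      one = {v. pres_eq S R [] v}\<rparr>"

text \<open>G_{Theta_n}(beta) = < x_1..x_n | (x_i)Theta_n(beta) = x_i >, relators (x_i)Theta_n(beta) x_i^{-1}.\<close>
definition G_Theta :: "(nat \<Rightarrow> endo2) \<Rightarrow> nat \<Rightarrow> (nat \<times> bool) list \<Rightarrow> word set monoid" where
  "G_Theta \<tau> n \<beta> = presented_group {1..n} ((\<lambda>i. Theta \<tau> \<beta> i @ [(i, False)]) ` {1..n})"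

type_synonym quad = "word \<times> word \<times> word \<times> word"

definition qinv :: "quad \<Rightarrow> quad" where
  "qinv q = (case q of (A, B, C, D) \<Rightarrow>
     (reduce (fst (inv2 (A, B))), reduce (snd (inv2 (A, B))),
      reduce (fst (inv2 (C, D))), reduce (snd (inv2 (C, D)))))"

definition swap_letters :: "word \<Rightarrow> word" where
  "swap_letters w = map (\<lambda>l. (if fst l = 0 then 1 else 0, snd l)) w"

definition qswap :: "quad \<Rightarrow> quad" where
  "qswap q = (case q of (A, B, C, D) \<Rightarrow>
     (swap_letters D, swap_letters C, swap_letters B, swap_letters A))"

definition qback :: "quad \<Rightarrow> quad" where
  "qback q = (case q of (A, B, C, D) \<Rightarrow> (rev A, rev B, rev C, rev D))"

text \<open>Equivalence up to natural symmetries: related by a composition of Inverse, Swap, Backward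
  (Inverse only applied to quadruples of automorphisms, where it is defined).\<close>
inductive sym_equiv :: "quad \<Rightarrow> quad \<Rightarrow> bool" where
  sym_base: "sym_equiv q q"
| sym_inv: "sym_equiv q (A, B, C, D) \<Longrightarrow> is_aut2 (A, B) \<Longrightarrow> is_aut2 (C, D)
          \<Longrightarrow> sym_equiv q (qinv (A, B, C, D))"
| sym_swap: "sym_equiv q q' \<Longrightarrow> sym_equiv q (qswap q')"
| sym_back: "sym_equiv q q' \<Longrightarrow> sym_equiv q (qback q')"

abbreviation la :: word where "la \<equiv> [(0, True)]"
abbreviation lA :: word where "lA \<equiv> [(0, False)]"
abbreviation lb :: word where "lb \<equiv> [(1, True)]"
abbreviation lB :: word where "lB \<equiv> [(1, False)]"

definition apow :: "nat \<Rightarrow> word" where "apow r = replicate r (0, True)"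
definition aneg :: "nat \<Rightarrow> word" where "aneg r = replicate r (0, False)"

datatype ltype = TA nat | TB | TC | TD

fun listed :: "ltype \<Rightarrow> quad set" where
  "listed (TA r) =
     {(apow r @ lb @ aneg r, la, apow r @ lb @ aneg r, la),
      (apow r @ lb @ aneg r, la, apow r @ lB @ aneg r, lA),
      (apow r @ lB @ aneg r, lA, aneg r @ lB @ apow r, lA)}"
| "listed TB = {(lB, la, lB, la), (lB, la, lb, lA)}"
| "listed TC =
     {(la @ lB @ la, la, la @ lB @ la, la),
      (la @ lB @ la, la, la @ lb @ la, lA),
      (la @ lb @ la, lA, la @ lb @ la, lA)}"
| "listed TD =
     {(lA @ lB @ la, lb @ lb @ la, lA @ lB @ la, lb @ lb @ la),
      (la @ lb @ lA, lb @ lb @ lA, lA @ lB @ la, lb @ lb @ la),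
      (lA @ lB @ la, lb @ lb @ la, lA @ lb @ la, lA @ lb @ lb),
      (la @ lb @ lA, lb @ lb @ lA, lA @ lb @ la, lA @ lb @ lb)}"

definition of_type :: "ltype \<Rightarrow> (nat \<Rightarrow> endo2) \<Rightarrow> bool" where
  "of_type L \<tau> \<longleftrightarrow> (\<forall>i \<ge> 1. \<exists>q \<in> listed L.
      sym_equiv q (reduce (fst (\<tau> i)), reduce (snd (\<tau> i)),
                   reduce (fst (\<tau> (i+1))), reduce (snd (\<tau> (i+1)))))"

end

theory Submission
  imports Defs
begin

lemma inv_letter_inv[simp]: "inv_letter (inv_letter x) = x"
  by (simp add: inv_letter_def)
lemma inv_letter_neq[simp]: "inv_letter x \<noteq> x"
  by (cases x) (simp add: inv_letter_def)
lemma fst_inv_letter[simp]: "fst (inv_letter x) = fst x"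
  by (simp add: inv_letter_def)
lemma inv_letter_pair[simp]: "inv_letter (a,b) = (a, \<not> b)"
  by (simp add: inv_letter_def)

lemma inv_word_Nil[simp]: "inv_word [] = []" by (simp add: inv_word_def)
lemma inv_word_Cons[simp]: "inv_word (x # w) = inv_word w @ [inv_letter x]"
  by (simp add: inv_word_def)
lemma inv_word_append[simp]: "inv_word (u @ v) = inv_word v @ inv_word u"
  by (simp add: inv_word_def)
lemma inv_word_inv[simp]: "inv_word (inv_word w) = w"
  by (simp add: inv_word_def rev_map comp_def)
lemma inv_word_single[simp]: "inv_word [x] = [inv_letter x]"
  by (simp add: inv_word_def)
lemma set_inv_word: "fst ` set (inv_word w) = fst ` set w"
  by (force simp add: inv_word_def image_iff)

lemma word_over_append[simp]: "word_over S (u @ v) \<longleftrightarrow> word_over S u \<and> word_over S v"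
  by (auto simp: word_over_def)
lemma word_over_Cons[simp]: "word_over S (x # v) \<longleftrightarrow> fst x \<in> S \<and> word_over S v"
  by (auto simp: word_over_def)
lemma word_over_Nil[simp]: "word_over S []"
  by (auto simp: word_over_def)
lemma word_over_inv[simp]: "word_over S (inv_word w) \<longleftrightarrow> word_over S w"
  by (induct w) auto
lemma word_over_mono: "word_over S w \<Longrightarrow> S \<subseteq> T \<Longrightarrow> word_over T w"
  by (auto simp: word_over_def)
lemma word_over_replicate[simp]: "word_over S (replicate r x) \<longleftrightarrow> r = 0 \<or> fst x \<in> S"
  by (induct r) auto

lemma subst_Nil[simp]: "subst f [] = []" by (simp add: subst_def)
lemma subst_Cons[simp]: "subst f (x # w) = (if snd x then f (fst x) else inv_word (f (fst x))) @ subst f w"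
  by (simp add: subst_def)
lemma subst_append[simp]: "subst f (u @ v) = subst f u @ subst f v"
  by (simp add: subst_def)
lemma subst_inv[simp]: "subst f (inv_word w) = inv_word (subst f w)"
  by (induct w) (auto simp: inv_letter_def)
lemma subst_subst: "subst f (subst g w) = subst (\<lambda>j. subst f (g j)) w"
  by (induct w) auto
lemma subst_id[simp]: "subst (\<lambda>j. [(j, True)]) w = w"
  by (induct w) (auto simp: inv_letter_def)
lemma subst_endo_id[simp]: "subst endo_id w = w"
  by (simp add: endo_id_def)
lemma subst_cong: "(\<And>j. j \<in> fst ` set w \<Longrightarrow> f j = g j) \<Longrightarrow> subst f w = subst g w"
  by (induct w) auto
lemma subst_over: "(\<And>j. j \<in> fst ` set w \<Longrightarrow> word_over S (f j)) \<Longrightarrow> word_over S (subst f w)"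
  by (induct w) auto
lemma subst_replicate[simp]: "subst f (replicate r x) = concat (replicate r (if snd x then f (fst x) else inv_word (f (fst x))))"
  by (induct r) auto

definition rstep :: "letter \<Rightarrow> word \<Rightarrow> word" where
  "rstep x acc = (case acc of [] \<Rightarrow> [x] | y # ys \<Rightarrow> (if y = inv_letter x then ys else x # acc))"

lemma reduce_foldr: "reduce w = foldr rstep w []"
  unfolding reduce_def rstep_def by simp

lemma reduce_Nil[simp]: "reduce [] = []" by (simp add: reduce_foldr)
lemma reduce_Cons: "reduce (x # w) = rstep x (reduce w)" by (simp add: reduce_foldr)
lemma reduce_append: "reduce (u @ v) = foldr rstep u (reduce v)" by (simp add: reduce_foldr)

fun reduced :: "word \<Rightarrow> bool" where
  "reduced [] = True"
| "reduced [x] = True"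
| "reduced (x # y # ys) = (y \<noteq> inv_letter x \<and> reduced (y # ys))"

lemma reduced_tl: "reduced (x # ys) \<Longrightarrow> reduced ys"
  by (cases ys) auto

lemma reduced_rstep: "reduced s \<Longrightarrow> reduced (rstep x s)"
  by (cases s rule: reduced.cases) (auto simp: rstep_def dest: reduced_tl split: list.splits)

lemma reduced_reduce: "reduced (reduce w)"
  by (induct w) (auto simp: reduce_Cons intro: reduced_rstep)

lemma rstep_cancel: "reduced s \<Longrightarrow> rstep x (rstep (inv_letter x) s) = s"
proof (cases s)
  case Nil then show ?thesis by (simp add: rstep_def)
next
  case (Cons y ys)
  assume r: "reduced s"
  show ?thesis
  proof (cases "y = x")
    case True
    with Cons r show ?thesis
      by (cases ys) (auto simp: rstep_def)
  next
    case False
    with Cons show ?thesis by (auto simp: rstep_def)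
  qed
qed

lemma reduce_reduced: "reduced w \<Longrightarrow> reduce w = w"
proof (induct w rule: reduced.induct)
  case (3 x y ys)
  then show ?case by (simp add: reduce_Cons rstep_def)
qed (auto simp: reduce_Cons rstep_def)

lemma reduce_idem[simp]: "reduce (reduce w) = reduce w"
  by (rule reduce_reduced[OF reduced_reduce])

lemma reduce_cancel: "reduce (u @ [x, inv_letter x] @ v) = reduce (u @ v)"
proof -
  have "reduce ([x, inv_letter x] @ v) = reduce v"
    by (simp add: reduce_Cons rstep_cancel reduced_reduce)
  then show ?thesis
    by (metis append.assoc reduce_append)
qed

lemma reduce_cancel': "reduce (u @ [inv_letter x, x] @ v) = reduce (u @ v)"
  using reduce_cancel[of u "inv_letter x" v] by simp

lemma pres_eq_cong: "pres_eq S R u v \<Longrightarrow> pres_eq S R (a @ u @ b) (a @ v @ b)"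
proof (induct rule: pres_eq.induct)
  case (refl w) then show ?case by (rule pres_eq.refl)
next
  case (sym u v) then show ?case by (blast intro: pres_eq.sym)
next
  case (trans u v w) then show ?case by (blast intro: pres_eq.trans)
next
  case (cancel x u v)
  then show ?case using pres_eq.cancel[of x S R "a @ u" "v @ b"] by simp
next
  case (rel r u v)
  then show ?case using pres_eq.rel[of r R S "a @ u" "v @ b"] by simp
qed

lemma pres_eq_app: "pres_eq S R u u' \<Longrightarrow> pres_eq S R v v' \<Longrightarrow> pres_eq S R (u @ v) (u' @ v')"
proof -
  assume a: "pres_eq S R u u'" and b: "pres_eq S R v v'"
  have "pres_eq S R ([] @ u @ v) ([] @ u' @ v)" using a by (rule pres_eq_cong)
  moreover have "pres_eq S R (u' @ v @ []) (u' @ v' @ [])" using b by (rule pres_eq_cong)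
  ultimately show ?thesis by (auto intro: pres_eq.trans)
qed

lemma pres_eq_trans': "pres_eq S R u v \<Longrightarrow> pres_eq S R v w \<Longrightarrow> pres_eq S R u w"
  by (rule pres_eq.trans)

lemma pres_eq_sym': "pres_eq S R u v \<Longrightarrow> pres_eq S R v u"
  by (rule pres_eq.sym)

lemma pres_eq_cancel_word: "word_over S w \<Longrightarrow> pres_eq S R (w @ inv_word w) []"
proof (induct w)
  case Nil then show ?case by (simp add: pres_eq.refl)
next
  case (Cons x w)
  have "pres_eq S R ([x] @ (w @ inv_word w) @ [inv_letter x]) ([x] @ [] @ [inv_letter x])"
    using Cons by (intro pres_eq_cong) simp
  moreover have "pres_eq S R ([] @ [x, inv_letter x] @ []) ([] @ [])"
    using Cons by (intro pres_eq.cancel) simp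
  ultimately show ?case by (auto intro: pres_eq.trans)
qed

lemma pres_eq_cancel_word': "word_over S w \<Longrightarrow> pres_eq S R (inv_word w @ w) []"
  using pres_eq_cancel_word[of S "inv_word w" R] by simp

lemma pres_eq_reduce: "word_over S w \<Longrightarrow> pres_eq S R w (reduce w)"
proof (induct w)
  case Nil then show ?case by (simp add: pres_eq.refl)
next
  case (Cons x w)
  then have 1: "pres_eq S R (x # w) (x # reduce w)"
    using pres_eq_cong[of S R w "reduce w" "[x]" "[]"] by simp
  show ?case
  proof (cases "reduce w")
    case Nil then show ?thesis using 1 by (simp add: reduce_Cons rstep_def)
  next
    case (Cons y ys)
    show ?thesis
    proof (cases "y = inv_letter x")
      case True
      have "pres_eq S R ([] @ [x, inv_letter x] @ ys) ([] @ ys)"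
        using \<open>word_over S (x # w)\<close> by (intro pres_eq.cancel) simp
      then show ?thesis using 1 Cons True
        by (auto simp: reduce_Cons rstep_def intro: pres_eq.trans)
    next
      case False
      then show ?thesis using 1 Cons by (simp add: reduce_Cons rstep_def)
    qed
  qed
qed

lemma reduce_pres_eq: "pres_eq S {} u v \<Longrightarrow> reduce u = reduce v"
proof (induct rule: pres_eq.induct)
  case (cancel x u v) show ?case by (rule reduce_cancel)
next
  case (refl w) show ?case by (rule HOL.refl)
next
  case (sym u v) from sym(2) show ?case by (rule HOL.sym)
next
  case (trans u v w) from trans(2,4) show ?case by (rule HOL.trans)
next
  case (rel r u v) then show ?case by simp
qed

lemma fe_pres_eq: "reduce u = reduce v \<Longrightarrow> word_over S u \<Longrightarrow> word_over S v \<Longrightarrow> pres_eq S R u v"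
proof -
  assume e: "reduce u = reduce v" and u: "word_over S u" and v: "word_over S v"
  have 0: "pres_eq S R u (reduce u)" by (rule pres_eq_reduce[OF u])
  have 1: "pres_eq S R u (reduce v)" using 0 unfolding e .
  have 2: "pres_eq S R (reduce v) v" by (rule pres_eq.sym[OF pres_eq_reduce[OF v]])
  show ?thesis by (rule pres_eq.trans[OF 1 2])
qed

lemma fe_iff: "reduce u = reduce v \<longleftrightarrow> pres_eq UNIV {} u v"
proof
  assume "reduce u = reduce v"
  then show "pres_eq UNIV {} u v" by (rule fe_pres_eq) (simp_all add: word_over_def)
next
  assume "pres_eq UNIV {} u v"
  then show "reduce u = reduce v" by (rule reduce_pres_eq)
qed

lemma fe_app: "reduce u = reduce u' \<Longrightarrow> reduce v = reduce v' \<Longrightarrow> reduce (u @ v) = reduce (u' @ v')"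
  by (simp add: fe_iff pres_eq_app)

lemma fe_app3: "reduce u = reduce u' \<Longrightarrow> reduce (a @ u @ b) = reduce (a @ u' @ b)"
  by (simp add: fe_iff pres_eq_cong)

lemma fe_inv_aux: "pres_eq UNIV {} u v \<Longrightarrow> pres_eq UNIV {} (inv_word u) (inv_word v)"
proof (induct rule: pres_eq.induct)
  case (cancel x u v)
  then show ?case using pres_eq.cancel[of "x" UNIV "{}" "inv_word v" "inv_word u"]
    by simp
next
  case (refl w) show ?case by (rule pres_eq.refl)
next
  case (sym u v) from sym(2) show ?case by (rule pres_eq.sym)
next
  case (trans u v w) from trans(2,4) show ?case by (rule pres_eq.trans)
next
  case (rel r u v) then show ?case by simp
qed

lemma fe_inv: "reduce u = reduce v \<Longrightarrow> reduce (inv_word u) = reduce (inv_word v)"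
  by (simp add: fe_iff fe_inv_aux)

lemma fe_cancel_word: "reduce (u @ w @ inv_word w @ v) = reduce (u @ v)"
proof -
  have "pres_eq UNIV {} (w @ inv_word w) []" by (rule pres_eq_cancel_word) (simp add: word_over_def)
  then have "reduce (w @ inv_word w) = reduce []" by (rule reduce_pres_eq)
  then show ?thesis using fe_app3[of "w @ inv_word w" "[]" u v] by simp
qed

lemma fe_cancel_word': "reduce (u @ inv_word w @ w @ v) = reduce (u @ v)"
  using fe_cancel_word[of u "inv_word w" v] by simp

lemma fe_subst_aux: "pres_eq UNIV {} u v \<Longrightarrow> pres_eq UNIV {} (subst f u) (subst f v)"
proof (induct rule: pres_eq.induct)
  case (cancel x u v)
  have "pres_eq UNIV {} (subst f u @ (subst f [x, inv_letter x]) @ subst f v) (subst f u @ [] @ subst f v)"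
  proof (intro pres_eq_cong)
    show "pres_eq UNIV {} (subst f [x, inv_letter x]) []"
      by (cases x) (auto simp: word_over_def intro: pres_eq_cancel_word pres_eq_cancel_word')
  qed
  then show ?case by simp
next
  case (refl w) show ?case by (rule pres_eq.refl)
next
  case (sym u v) from sym(2) show ?case by (rule pres_eq.sym)
next
  case (trans u v w) from trans(2,4) show ?case by (rule pres_eq.trans)
next
  case (rel r u v) then show ?case by simp
qed

lemma fe_subst: "reduce u = reduce v \<Longrightarrow> reduce (subst f u) = reduce (subst f v)"
  by (simp add: fe_iff fe_subst_aux)

lemma fe_subst_cong: "(\<And>j. j \<in> fst ` set w \<Longrightarrow> reduce (f j) = reduce (g j)) \<Longrightarrow> reduce (subst f w) = reduce (subst g w)"
proof (induct w)
  case (Cons x w)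
  have fx: "reduce (f (fst x)) = reduce (g (fst x))" using Cons(2)[of "fst x"] by simp
  have 1: "reduce (if snd x then f (fst x) else inv_word (f (fst x))) = reduce (if snd x then g (fst x) else inv_word (g (fst x)))"
  proof (cases "snd x")
    case True then show ?thesis using fx by simp
  next
    case False then show ?thesis using fe_inv[OF fx] by simp
  qed
  have 2: "reduce (subst f w) = reduce (subst g w)"
    by (rule Cons(1)) (rule Cons(2), simp)
  show ?case unfolding subst_Cons by (rule fe_app[OF 1 2])
qed simp

lemma fe_replicate_cancel: "reduce (u @ replicate r x @ replicate r (inv_letter x) @ w) = reduce (u @ w)"
proof (induct r arbitrary: u)
  case 0 then show ?case by simp
next
  case (Suc r)
  have "u @ replicate (Suc r) x @ replicate (Suc r) (inv_letter x) @ w =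
        (u @ replicate r x) @ [x, inv_letter x] @ (replicate r (inv_letter x) @ w)"
    by (simp add: replicate_append_same[symmetric])
  then have "reduce (u @ replicate (Suc r) x @ replicate (Suc r) (inv_letter x) @ w) =
     reduce ((u @ replicate r x) @ (replicate r (inv_letter x) @ w))"
    by (simp only: reduce_cancel)
  then show ?case using Suc by simp
qed


section \<open>presented groups\<close>

definition cls :: "nat set \<Rightarrow> word set \<Rightarrow> word \<Rightarrow> word set" where
  "cls S R w = {v. pres_eq S R w v}"

lemma cls_eq_iff: "cls S R a = cls S R b \<longleftrightarrow> pres_eq S R a b"
proof
  assume e: "cls S R a = cls S R b"
  have "b \<in> cls S R b" by (simp add: cls_def pres_eq.refl)
  then have "b \<in> cls S R a" by (simp only: e)
  then show "pres_eq S R a b" by (simp add: cls_def)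
next
  assume ab: "pres_eq S R a b"
  show "cls S R a = cls S R b"
  proof (rule Set.set_eqI)
    fix v
    show "v \<in> cls S R a \<longleftrightarrow> v \<in> cls S R b"
    proof
      assume "v \<in> cls S R a"
      then have "pres_eq S R a v" by (simp add: cls_def)
      then have "pres_eq S R b v" by (rule pres_eq.trans[OF pres_eq.sym[OF ab]])
      then show "v \<in> cls S R b" by (simp add: cls_def)
    next
      assume "v \<in> cls S R b"
      then have "pres_eq S R b v" by (simp add: cls_def)
      then have "pres_eq S R a v" by (rule pres_eq.trans[OF ab])
      then show "v \<in> cls S R a" by (simp add: cls_def)
    qed
  qed
qed

lemma carrier_pg: "carrier (presented_group S R) = cls S R ` {w. word_over S w}"
  by (simp add: presented_group_def cls_def)

lemma mult_pg: "cls S R a \<otimes>\<^bsub>presented_group S R\<^esub> cls S R b = cls S R (a @ b)"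
proof -
  have "{v. \<exists>a'\<in>cls S R a. \<exists>b'\<in>cls S R b. pres_eq S R (a' @ b') v} = cls S R (a @ b)"
  proof (rule Set.set_eqI)
    fix v
    show "v \<in> {v. \<exists>a'\<in>cls S R a. \<exists>b'\<in>cls S R b. pres_eq S R (a' @ b') v} \<longleftrightarrow> v \<in> cls S R (a @ b)"
    proof
      assume "v \<in> {v. \<exists>a'\<in>cls S R a. \<exists>b'\<in>cls S R b. pres_eq S R (a' @ b') v}"
      then obtain a' b' where 1: "pres_eq S R a a'" "pres_eq S R b b'" "pres_eq S R (a' @ b') v"
        by (auto simp: cls_def)
      have "pres_eq S R (a @ b) (a' @ b')" by (rule pres_eq_app[OF 1(1,2)])
      then show "v \<in> cls S R (a @ b)" using 1(3) by (simp add: cls_def pres_eq.trans)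
    next
      assume "v \<in> cls S R (a @ b)"
      then show "v \<in> {v. \<exists>a'\<in>cls S R a. \<exists>b'\<in>cls S R b. pres_eq S R (a' @ b') v}"
        by (auto simp: cls_def intro!: bexI[of _ a] bexI[of _ b] pres_eq.refl)
    qed
  qed
  then show ?thesis by (simp add: presented_group_def cls_def)
qed

lemma pres_over: assumes RS: "\<forall>r\<in>R. word_over S r"
  shows "pres_eq S R u v \<Longrightarrow> word_over S u \<longleftrightarrow> word_over S v"
proof (induct rule: pres_eq.induct)
  case (rel r u v) then show ?case using RS by auto
qed auto

lemma pres_map:
  assumes RS: "\<forall>r\<in>R. word_over S r"
    and hpsi: "\<forall>j\<in>S. word_over S' (\<psi> j)"
    and hR: "\<forall>r\<in>R. pres_eq S' R' (subst \<psi> r) []"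
  shows "pres_eq S R u v \<Longrightarrow> word_over S u \<Longrightarrow> pres_eq S' R' (subst \<psi> u) (subst \<psi> v)"
proof (induct rule: pres_eq.induct)
  case (refl w) show ?case by (rule pres_eq.refl)
next
  case (sym u v)
  have "word_over S u" using sym(1) sym(3) pres_over[OF RS] by blast
  then show ?case using sym(2) by (blast intro: pres_eq.sym)
next
  case (trans u v w)
  have "word_over S v" using trans(1) trans(5) pres_over[OF RS] by blast
  then show ?case using trans by (blast intro: pres_eq.trans)
next
  case (cancel x u v)
  have xo: "word_over S' (\<psi> (fst x))" using cancel(1) hpsi by blast
  have c: "pres_eq S' R' (subst \<psi> [x, inv_letter x]) []"
  proof (cases "snd x")
    case True then show ?thesis using pres_eq_cancel_word[OF xo] by (simp add: inv_letter_def)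
  next
    case False then show ?thesis using pres_eq_cancel_word'[OF xo] by (simp add: inv_letter_def)
  qed
  show ?case using pres_eq_cong[OF c, of "subst \<psi> u" "subst \<psi> v"] by simp
next
  case (rel r u v)
  show ?case using pres_eq_cong[of S' R' "subst \<psi> r" "[]" "subst \<psi> u" "subst \<psi> v"] hR rel(1) by simp
qed

lemma pres_iso:
  assumes RS: "\<forall>r\<in>R. word_over S r" and RS': "\<forall>r\<in>R'. word_over S' r"
    and hpsi: "\<forall>j\<in>S. word_over S' (\<psi> j)" and hphi: "\<forall>j\<in>S'. word_over S (\<phi> j)"
    and hR: "\<forall>r\<in>R. pres_eq S' R' (subst \<psi> r) []"
    and hR': "\<forall>r\<in>R'. pres_eq S R (subst \<phi> r) []"
    and i1: "\<forall>w. word_over S w \<longrightarrow> pres_eq S R (subst \<phi> (subst \<psi> w)) w"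
    and i2: "\<forall>w. word_over S' w \<longrightarrow> pres_eq S' R' (subst \<psi> (subst \<phi> w)) w"
  shows "presented_group S R \<cong> presented_group S' R'"
proof -
  define h where "h X = {v. \<exists>w\<in>X. word_over S w \<and> pres_eq S' R' (subst \<psi> w) v}" for X
  have ov1: "word_over S' (subst \<psi> w)" if "word_over S w" for w
    using that hpsi by (intro subst_over) (auto simp: word_over_def)
  have ov2: "word_over S (subst \<phi> w)" if "word_over S' w" for w
    using that hphi by (intro subst_over) (auto simp: word_over_def)
  have map1: "pres_eq S' R' (subst \<psi> u) (subst \<psi> v)" if "pres_eq S R u v" "word_over S u" for u v
    using pres_map[OF RS hpsi hR] that by blast
  have map2: "pres_eq S R (subst \<phi> u) (subst \<phi> v)" if "pres_eq S' R' u v" "word_over S' u" for u v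
    using pres_map[OF RS' hphi hR'] that by blast
  have hcls: "h (cls S R a) = cls S' R' (subst \<psi> a)" if a: "word_over S a" for a
  proof (rule Set.set_eqI)
    fix v
    show "v \<in> h (cls S R a) \<longleftrightarrow> v \<in> cls S' R' (subst \<psi> a)"
    proof
      assume "v \<in> h (cls S R a)"
      then obtain w where w: "pres_eq S R a w" "word_over S w" "pres_eq S' R' (subst \<psi> w) v"
        by (auto simp: h_def cls_def)
      have "pres_eq S' R' (subst \<psi> a) (subst \<psi> w)" using map1[OF w(1) a] .
      then show "v \<in> cls S' R' (subst \<psi> a)" using w(3) by (simp add: cls_def pres_eq.trans)
    next
      assume "v \<in> cls S' R' (subst \<psi> a)"
      then show "v \<in> h (cls S R a)" using a
        by (auto simp: h_def cls_def intro!: bexI[of _ a] pres_eq.refl)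
    qed
  qed
  have hom: "h \<in> hom (presented_group S R) (presented_group S' R')"
  proof (rule homI)
    fix x assume "x \<in> carrier (presented_group S R)"
    then obtain a where a: "word_over S a" "x = cls S R a" by (auto simp: carrier_pg)
    then show "h x \<in> carrier (presented_group S' R')"
      using hcls[OF a(1)] ov1[OF a(1)] by (auto simp: carrier_pg)
  next
    fix x y assume "x \<in> carrier (presented_group S R)" "y \<in> carrier (presented_group S R)"
    then obtain a b where a: "word_over S a" "x = cls S R a" and b: "word_over S b" "y = cls S R b"
      by (auto simp: carrier_pg)
    show "h (x \<otimes>\<^bsub>presented_group S R\<^esub> y) = h x \<otimes>\<^bsub>presented_group S' R'\<^esub> h y"
      using a b by (simp add: mult_pg hcls)
  qed
  have inj: "inj_on h (carrier (presented_group S R))"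
  proof (rule inj_onI)
    fix x y assume "x \<in> carrier (presented_group S R)" "y \<in> carrier (presented_group S R)" "h x = h y"
    then obtain a b where a: "word_over S a" "x = cls S R a" and b: "word_over S b" "y = cls S R b"
      and e: "h x = h y"
      by (auto simp: carrier_pg)
    have "pres_eq S' R' (subst \<psi> a) (subst \<psi> b)" using e a b by (simp add: hcls cls_eq_iff)
    then have "pres_eq S R (subst \<phi> (subst \<psi> a)) (subst \<phi> (subst \<psi> b))" using map2 ov1[OF a(1)] by blast
    then have "pres_eq S R a b"
      using i1 a(1) b(1) by (meson pres_eq.sym pres_eq.trans)
    then show "x = y" using a b by (simp add: cls_eq_iff)
  qed
  have surj: "h ` carrier (presented_group S R) = carrier (presented_group S' R')"
  proof
    show "h ` carrier (presented_group S R) \<subseteq> carrier (presented_group S' R')"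
      using hom by (auto simp: hom_def)
  next
    show "carrier (presented_group S' R') \<subseteq> h ` carrier (presented_group S R)"
    proof
      fix y assume "y \<in> carrier (presented_group S' R')"
      then obtain c where c: "word_over S' c" "y = cls S' R' c" by (auto simp: carrier_pg)
      have "h (cls S R (subst \<phi> c)) = y"
        using hcls[OF ov2[OF c(1)]] i2 c by (simp add: cls_eq_iff)
      moreover have "cls S R (subst \<phi> c) \<in> carrier (presented_group S R)"
        using ov2[OF c(1)] by (auto simp: carrier_pg)
      ultimately show "y \<in> h ` carrier (presented_group S R)" by blast
    qed
  qed
  have "h \<in> iso (presented_group S R) (presented_group S' R')"
    using hom inj surj by (simp add: iso_iff)
  then show ?thesis by (rule is_isoI)
qed


definition ov :: "nat \<Rightarrow> (nat \<Rightarrow> word) \<Rightarrow> bool" where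
  "ov n \<phi> \<longleftrightarrow> (\<forall>j\<in>{1..n}. word_over {1..n} (\<phi> j))"

definition EE :: "nat \<Rightarrow> (nat \<Rightarrow> word) \<Rightarrow> (nat \<Rightarrow> word) \<Rightarrow> bool" where
  "EE n \<phi> \<psi> \<longleftrightarrow> (\<forall>j\<in>{1..n}. reduce (\<phi> j) = reduce (\<psi> j))"

lemma endo_eq_EE: "endo_eq n = EE n"
  by (simp add: endo_eq_def EE_def fun_eq_iff)

lemma EE_refl[simp]: "EE n \<phi> \<phi>" by (simp add: EE_def)
lemma EE_sym: "EE n \<phi> \<psi> \<Longrightarrow> EE n \<psi> \<phi>" by (simp add: EE_def)
lemma EE_trans: "EE n \<phi> \<psi> \<Longrightarrow> EE n \<psi> \<chi> \<Longrightarrow> EE n \<phi> \<chi>" by (simp add: EE_def)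

lemma rcomp_assoc: "rcomp (rcomp \<phi> \<psi>) \<chi> = rcomp \<phi> (rcomp \<psi> \<chi>)"
  by (simp add: rcomp_def subst_subst fun_eq_iff)
lemma rcomp_id_r[simp]: "rcomp \<phi> endo_id = \<phi>"
  by (simp add: rcomp_def fun_eq_iff)
lemma rcomp_id_l[simp]: "rcomp endo_id \<phi> = \<phi>"
  by (simp add: rcomp_def fun_eq_iff endo_id_def)

lemma subst_rcomp: "subst (rcomp \<phi> \<psi>) w = subst \<psi> (subst \<phi> w)"
  by (simp add: rcomp_def subst_subst)

lemma ov_id[simp]: "ov n endo_id" by (simp add: ov_def endo_id_def)

lemma ov_subst: assumes "ov n \<psi>" "word_over {1..n} w" shows "word_over {1..n} (subst \<psi> w)"
proof (rule subst_over)
  fix j assume "j \<in> fst ` set w"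
  then have "j \<in> {1..n}" using assms(2) by (auto simp: word_over_def)
  then show "word_over {1..n} (\<psi> j)" using assms(1) by (simp add: ov_def)
qed

lemma ov_comp: assumes "ov n \<phi>" "ov n \<psi>" shows "ov n (rcomp \<phi> \<psi>)"
  unfolding ov_def rcomp_def
proof
  fix j assume j: "j \<in> {1..n}"
  have "word_over {1..n} (\<phi> j)" using assms(1) j by (simp add: ov_def)
  then show "word_over {1..n} (subst \<psi> (\<phi> j))" by (rule ov_subst[OF assms(2)])
qed

lemma fe_subst_EE: "EE n \<psi> \<psi>' \<Longrightarrow> word_over {1..n} w \<Longrightarrow> reduce (subst \<psi> w) = reduce (subst \<psi>' w)"
  by (rule fe_subst_cong) (auto simp: EE_def word_over_def)

lemma EE_comp: "ov n \<phi>' \<Longrightarrow> EE n \<phi> \<phi>' \<Longrightarrow> EE n \<psi> \<psi>' \<Longrightarrow> EE n (rcomp \<phi> \<psi>) (rcomp \<phi>' \<psi>')"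
  unfolding EE_def rcomp_def
proof
  fix j :: nat assume o: "ov n \<phi>'" and e1: "\<forall>j\<in>{1..n}. reduce (\<phi> j) = reduce (\<phi>' j)"
    and e2: "\<forall>j\<in>{1..n}. reduce (\<psi> j) = reduce (\<psi>' j)" and j: "j \<in> {1..n}"
  have "reduce (subst \<psi> (\<phi> j)) = reduce (subst \<psi> (\<phi>' j))" using e1 j by (intro fe_subst) simp
  also have "\<dots> = reduce (subst \<psi>' (\<phi>' j))"
    using o j e2 by (intro fe_subst_EE[of n]) (auto simp: EE_def ov_def)
  finally show "reduce (subst \<psi> (\<phi> j)) = reduce (subst \<psi>' (\<phi>' j))" .
qed

lemma EE_comp_l: "ov n \<phi> \<Longrightarrow> EE n \<psi> \<psi>' \<Longrightarrow> EE n (rcomp \<phi> \<psi>) (rcomp \<phi> \<psi>')"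
  by (rule EE_comp) simp_all
lemma EE_comp_r: "ov n \<phi>' \<Longrightarrow> EE n \<phi> \<phi>' \<Longrightarrow> EE n (rcomp \<phi> \<psi>) (rcomp \<phi>' \<psi>)"
  by (rule EE_comp) simp_all

section \<open>relators and the presentation lemma\<close>

definition rels :: "nat \<Rightarrow> (nat \<Rightarrow> word) \<Rightarrow> word set" where
  "rels n A = (\<lambda>i. A i @ [(i, False)]) ` {1..n}"

lemma G_Theta_rels: "G_Theta \<tau> n \<beta> = presented_group {1..n} (rels n (Theta \<tau> \<beta>))"
  by (simp add: G_Theta_def rels_def)

lemma rels_over: "ov n A \<Longrightarrow> \<forall>r\<in>rels n A. word_over {1..n} r"
  by (auto simp: rels_def ov_def)

lemma rel_gen: "i \<in> {1..n} \<Longrightarrow> ov n A \<Longrightarrow> pres_eq {1..n} (rels n A) (A i) [(i, True)]"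
proof -
  assume i: "i \<in> {1..n}" and o: "ov n A"
  have 1: "pres_eq {1..n} (rels n A) ([] @ (A i @ [(i, False)]) @ [(i, True)]) ([] @ [(i, True)])"
    using i by (intro pres_eq.rel) (auto simp: rels_def)
  have 2: "pres_eq {1..n} (rels n A) (A i @ [(i, False), inv_letter (i, False)] @ []) (A i @ [])"
    using i by (intro pres_eq.cancel) auto
  show ?thesis using pres_eq.trans[OF pres_eq.sym[OF 2[simplified]] 1[simplified]] by simp
qed

lemma rel_all: assumes o: "ov n A"
  shows "word_over {1..n} w \<Longrightarrow> pres_eq {1..n} (rels n A) (subst A w) w"
proof (induct w)
  case Nil then show ?case by (simp add: pres_eq.refl)
next
  case (Cons x w)
  obtain i s where x: "x = (i, s)" by (cases x)
  have i: "i \<in> {1..n}" using Cons(2) x by simp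
  have ai: "word_over {1..n} (A i)" using o i by (simp add: ov_def)
  have g: "pres_eq {1..n} (rels n A) (if s then A i else inv_word (A i)) [(i, s)]"
  proof (cases s)
    case True then show ?thesis using rel_gen[OF i o] by simp
  next
    case False
    have "A i @ [(i, False)] \<in> rels n A" using i by (auto simp: rels_def)
    then have 1: "pres_eq {1..n} (rels n A) (inv_word (A i) @ [] @ []) (inv_word (A i) @ (A i @ [(i, False)]) @ [])"
      using pres_eq.sym[OF pres_eq.rel[where r="A i @ [(i, False)]" and R="rels n A" and S="{1..n}" and u="inv_word (A i)" and v="[]"]] by simp
    have 2: "pres_eq {1..n} (rels n A) ((inv_word (A i) @ A i) @ [(i, False)]) ([] @ [(i, False)])"
      by (rule pres_eq_app[OF pres_eq_cancel_word'[OF ai] pres_eq.refl])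
    show ?thesis using pres_eq.trans[OF 1[simplified] 2[simplified]] False by simp
  qed
  have "pres_eq {1..n} (rels n A) ((if s then A i else inv_word (A i)) @ subst A w) ([(i, s)] @ w)"
    using Cons by (intro pres_eq_app[OF g]) simp
  then show ?case using x by (cases s) simp_all
qed

lemma GL:
  assumes oA: "ov n A" and oB: "ov n B" and ophi: "ov n \<phi>" and opsi: "ov n \<psi>"
    and i1: "EE n (rcomp \<phi> \<psi>) endo_id" and i2: "EE n (rcomp \<psi> \<phi>) endo_id"
    and c: "EE n A (rcomp (rcomp \<psi> B) \<phi>)"
  shows "presented_group {1..n} (rels n A) \<cong> presented_group {1..n} (rels n B)"
proof (rule pres_iso[where \<psi> = \<psi> and \<phi> = \<phi>])
  show "\<forall>r\<in>rels n A. word_over {1..n} r" by (rule rels_over[OF oA])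
  show "\<forall>r\<in>rels n B. word_over {1..n} r" by (rule rels_over[OF oB])
  show "\<forall>j\<in>{1..n}. word_over {1..n} (\<psi> j)" using opsi by (simp add: ov_def)
  show "\<forall>j\<in>{1..n}. word_over {1..n} (\<phi> j)" using ophi by (simp add: ov_def)
  show "\<forall>w. word_over {1..n} w \<longrightarrow> pres_eq {1..n} (rels n A) (subst \<phi> (subst \<psi> w)) w"
  proof (intro allI impI)
    fix w assume w: "word_over {1..n} w"
    have "reduce (subst \<phi> (subst \<psi> w)) = reduce (subst endo_id w)"
      using fe_subst_EE[OF i2 w] by (simp only: subst_rcomp)
    moreover have "word_over {1..n} (subst \<phi> (subst \<psi> w))" by (rule ov_subst[OF ophi ov_subst[OF opsi w]])
    ultimately show "pres_eq {1..n} (rels n A) (subst \<phi> (subst \<psi> w)) w"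
      using w by (intro fe_pres_eq) simp_all
  qed
  show "\<forall>w. word_over {1..n} w \<longrightarrow> pres_eq {1..n} (rels n B) (subst \<psi> (subst \<phi> w)) w"
  proof (intro allI impI)
    fix w assume w: "word_over {1..n} w"
    have "reduce (subst \<psi> (subst \<phi> w)) = reduce (subst endo_id w)"
      using fe_subst_EE[OF i1 w] by (simp only: subst_rcomp)
    moreover have "word_over {1..n} (subst \<psi> (subst \<phi> w))" by (rule ov_subst[OF opsi ov_subst[OF ophi w]])
    ultimately show "pres_eq {1..n} (rels n B) (subst \<psi> (subst \<phi> w)) w"
      using w by (intro fe_pres_eq) simp_all
  qed
  show "\<forall>r\<in>rels n A. pres_eq {1..n} (rels n B) (subst \<psi> r) []"
  proof
    fix r assume "r \<in> rels n A"
    then obtain i where i: "i \<in> {1..n}" and r: "r = A i @ [(i, False)]" by (auto simp: rels_def)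
    have pi: "word_over {1..n} (\<psi> i)" using opsi i by (simp add: ov_def)
    have sB: "word_over {1..n} (subst B (\<psi> i))" by (rule ov_subst[OF oB pi])
    have "reduce (subst \<psi> (A i)) = reduce (subst \<psi> (subst \<phi> (subst B (\<psi> i))))"
      using c i by (intro fe_subst) (simp add: EE_def rcomp_def)
    also have "\<dots> = reduce (subst endo_id (subst B (\<psi> i)))"
      using fe_subst_EE[OF i1 sB] by (simp only: subst_rcomp)
    finally have e: "reduce (subst \<psi> (A i) @ inv_word (\<psi> i)) = reduce (subst B (\<psi> i) @ inv_word (\<psi> i))"
      by (intro fe_app) simp_all
    have 1: "pres_eq {1..n} (rels n B) (subst \<psi> (A i) @ inv_word (\<psi> i)) (subst B (\<psi> i) @ inv_word (\<psi> i))"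
    proof (rule fe_pres_eq[OF e])
      have "word_over {1..n} (A i)" using oA i by (simp add: ov_def)
      then show "word_over {1..n} (subst \<psi> (A i) @ inv_word (\<psi> i))" using ov_subst[OF opsi] pi by simp
      show "word_over {1..n} (subst B (\<psi> i) @ inv_word (\<psi> i))" using sB pi by simp
    qed
    have 2: "pres_eq {1..n} (rels n B) (subst B (\<psi> i) @ inv_word (\<psi> i)) (\<psi> i @ inv_word (\<psi> i))"
      by (rule pres_eq_app[OF rel_all[OF oB pi] pres_eq.refl])
    have 3: "pres_eq {1..n} (rels n B) (\<psi> i @ inv_word (\<psi> i)) []" by (rule pres_eq_cancel_word[OF pi])
    show "pres_eq {1..n} (rels n B) (subst \<psi> r) []"
      using pres_eq.trans[OF pres_eq.trans[OF 1 2] 3] r by simp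
  qed
  show "\<forall>r\<in>rels n B. pres_eq {1..n} (rels n A) (subst \<phi> r) []"
  proof
    fix r assume "r \<in> rels n B"
    then obtain i where i: "i \<in> {1..n}" and r: "r = B i @ [(i, False)]" by (auto simp: rels_def)
    have pi: "word_over {1..n} (\<phi> i)" using ophi i by (simp add: ov_def)
    have "reduce (subst A (\<phi> i)) = reduce (subst (rcomp (rcomp \<psi> B) \<phi>) (\<phi> i))"
      using c pi by (rule fe_subst_EE)
    also have "\<dots> = reduce (subst \<phi> (subst B (subst \<psi> (\<phi> i))))"
      by (simp add: rcomp_def subst_subst)
    also have "\<dots> = reduce (subst \<phi> (subst B [(i, True)]))"
    proof -
      have "reduce (subst \<psi> (\<phi> i)) = reduce [(i, True)]"
        using i1 i by (simp add: EE_def rcomp_def endo_id_def)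
      then have "reduce (subst B (subst \<psi> (\<phi> i))) = reduce (subst B [(i, True)])" by (rule fe_subst)
      then show ?thesis by (rule fe_subst)
    qed
    also have "\<dots> = reduce (subst \<phi> (B i))" by simp
    finally have e: "reduce (subst \<phi> (B i) @ inv_word (\<phi> i)) = reduce (subst A (\<phi> i) @ inv_word (\<phi> i))"
      by (intro fe_app) simp_all
    have bi: "word_over {1..n} (B i)" using oB i by (simp add: ov_def)
    have 1: "pres_eq {1..n} (rels n A) (subst \<phi> (B i) @ inv_word (\<phi> i)) (subst A (\<phi> i) @ inv_word (\<phi> i))"
    proof (rule fe_pres_eq[OF e])
      show "word_over {1..n} (subst \<phi> (B i) @ inv_word (\<phi> i))" using ov_subst[OF ophi bi] pi by simp
      show "word_over {1..n} (subst A (\<phi> i) @ inv_word (\<phi> i))" using ov_subst[OF oA pi] pi by simp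
    qed
    have 2: "pres_eq {1..n} (rels n A) (subst A (\<phi> i) @ inv_word (\<phi> i)) (\<phi> i @ inv_word (\<phi> i))"
      by (rule pres_eq_app[OF rel_all[OF oA pi] pres_eq.refl])
    have 3: "pres_eq {1..n} (rels n A) (\<phi> i @ inv_word (\<phi> i)) []" by (rule pres_eq_cancel_word[OF pi])
    show "pres_eq {1..n} (rels n A) (subst \<phi> r) []"
      using pres_eq.trans[OF pres_eq.trans[OF 1 2] 3] r by simp
  qed
qed


declare EE_trans[trans]

lemma reduce_single[simp]: "reduce [x] = [x]" by (simp add: reduce_Cons rstep_def)

lemma Theta_append: "Theta \<tau> (u @ v) = rcomp (Theta \<tau> u) (Theta \<tau> v)"
  by (induct u) (simp_all add: rcomp_assoc)

lemma Theta_single: "Theta \<tau> [s] = gen_img \<tau> s" by simp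

definition sh :: "nat \<Rightarrow> nat \<Rightarrow> word" where "sh i = (\<lambda>k. [(i + k, True)])"

definition over2 :: "endo2 \<Rightarrow> bool" where
  "over2 t \<longleftrightarrow> word_over {0,1} (fst t) \<and> word_over {0,1} (snd t)"

lemma is_aut2_over2: "is_aut2 t \<Longrightarrow> over2 t" by (simp add: is_aut2_def over2_def)

lemma inv2_prop: "is_aut2 t \<Longrightarrow> is_inverse2 t (inv2 t)"
  unfolding inv2_def is_aut2_def by (blast intro: someI_ex)

lemma is_inverse2_over: "is_inverse2 t g \<Longrightarrow> over2 g" by (simp add: is_inverse2_def over2_def)

lemma subst_sh_single[simp]: "subst (sh i) [(k, True)] = [(i + k, True)]" by (simp add: sh_def)

lemma Tloc_at: "Tloc i t i = subst (sh i) (fst t)" by (simp add: Tloc_def sh_def)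
lemma Tloc_at1: "Tloc i t (Suc i) = subst (sh i) (snd t)" by (simp add: Tloc_def sh_def)
lemma Tloc_other: "j \<noteq> i \<Longrightarrow> j \<noteq> Suc i \<Longrightarrow> Tloc i t j = [(j, True)]" by (simp add: Tloc_def)

lemma Tloc_sh: "k \<in> {0,1} \<Longrightarrow> Tloc i g (i + k) = subst (sh i) (endo2_fun g k)"
  by (auto simp: Tloc_def sh_def endo2_fun_def)

lemma TL_comp: "word_over {0,1} w \<Longrightarrow> subst (Tloc i g) (subst (sh i) w) = subst (sh i) (subst (endo2_fun g) w)"
proof -
  assume w: "word_over {0,1} w"
  have "subst (Tloc i g) (subst (sh i) w) = subst (\<lambda>k. Tloc i g (i + k)) w"
    by (simp add: subst_subst sh_def)
  also have "\<dots> = subst (\<lambda>k. subst (sh i) (endo2_fun g k)) w"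
  proof (rule subst_cong)
    fix k assume "k \<in> fst ` set w"
    then have "k \<in> {0,1}" using w by (auto simp: word_over_def)
    then show "Tloc i g (i + k) = subst (sh i) (endo2_fun g k)" by (rule Tloc_sh)
  qed
  also have "\<dots> = subst (sh i) (subst (endo2_fun g) w)" by (simp add: subst_subst)
  finally show ?thesis .
qed

lemma sh_over: "word_over {0,1} w \<Longrightarrow> 1 \<le> i \<Longrightarrow> i < n \<Longrightarrow> word_over {1..n} (subst (sh i) w)"
  by (rule subst_over) (auto simp: sh_def word_over_def)

lemma ov_Tloc: "over2 t \<Longrightarrow> 1 \<le> i \<Longrightarrow> i < n \<Longrightarrow> ov n (Tloc i t)"
  unfolding ov_def
proof
  fix j assume t: "over2 t" and i: "1 \<le> i" "i < n" and j: "j \<in> {1..n}"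
  show "word_over {1..n} (Tloc i t j)"
  proof (cases "j = i \<or> j = Suc i")
    case True then show ?thesis using t i sh_over[of _ i n]
      by (auto simp: Tloc_at Tloc_at1 over2_def)
  next
    case False then show ?thesis using j by (simp add: Tloc_other)
  qed
qed

lemma Tloc_cong: "reduce (fst t) = reduce (fst t') \<Longrightarrow> reduce (snd t) = reduce (snd t') \<Longrightarrow> EE n (Tloc i t) (Tloc i t')"
  unfolding EE_def
proof
  fix j assume a: "reduce (fst t) = reduce (fst t')" and b: "reduce (snd t) = reduce (snd t')"
  show "reduce (Tloc i t j) = reduce (Tloc i t' j)"
    using fe_subst[OF a, of "sh i"] fe_subst[OF b, of "sh i"]
    by (cases "j = i \<or> j = Suc i") (auto simp: Tloc_at Tloc_at1 Tloc_other)
qed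

lemma Tloc_inv: assumes g: "is_inverse2 t g" and t: "over2 t"
  shows "EE n (rcomp (Tloc i t) (Tloc i g)) endo_id"
  unfolding EE_def
proof
  fix j
  have e0: "reduce (subst (endo2_fun g) (fst t)) = [(0, True)]"
   and e1: "reduce (subst (endo2_fun g) (snd t)) = [(1, True)]"
    using g by (auto simp: is_inverse2_def endo2_fun_def)
  show "reduce (rcomp (Tloc i t) (Tloc i g) j) = reduce (endo_id j)"
  proof (cases "j = i")
    case True
    have "reduce (subst (sh i) (subst (endo2_fun g) (fst t))) = reduce (subst (sh i) [(0, True)])"
      using e0 by (intro fe_subst) simp
    then have "reduce (subst (sh i) (subst (endo2_fun g) (fst t))) = [(i, True)]"
      by (simp add: sh_def)
    then show ?thesis using True t
      by (simp add: rcomp_def Tloc_at TL_comp over2_def endo_id_def)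
  next
    case False
    show ?thesis
    proof (cases "j = Suc i")
      case True
      have "reduce (subst (sh i) (subst (endo2_fun g) (snd t))) = reduce (subst (sh i) [(1, True)])"
        using e1 by (intro fe_subst) simp
      then have "reduce (subst (sh i) (subst (endo2_fun g) (snd t))) = [(Suc i, True)]"
        by (simp add: sh_def)
      then show ?thesis using True t
        by (simp add: rcomp_def Tloc_at1 TL_comp over2_def endo_id_def)
    next
      case False
      then show ?thesis using \<open>j \<noteq> i\<close> by (simp add: rcomp_def Tloc_other endo_id_def)
    qed
  qed
qed

lemma is_inverse2_sym: "is_inverse2 t g \<Longrightarrow> over2 t \<Longrightarrow> is_inverse2 g t"
  by (auto simp: is_inverse2_def over2_def)

lemma gen_img_ov: "is_aut2 (\<tau> (fst s)) \<Longrightarrow> 1 \<le> fst s \<Longrightarrow> fst s < n \<Longrightarrow> ov n (gen_img \<tau> s)"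
  unfolding gen_img_def
  by (auto intro: ov_Tloc is_aut2_over2 is_inverse2_over[OF inv2_prop])

lemma Theta_ov: "braid_word n \<beta> \<Longrightarrow> (\<forall>i\<in>{1..<n}. is_aut2 (\<tau> i)) \<Longrightarrow> ov n (Theta \<tau> \<beta>)"
proof (induct \<beta>)
  case Nil then show ?case by simp
next
  case (Cons s \<beta>)
  then have "braid_word n \<beta>" "1 \<le> fst s" "fst s < n" by (auto simp: braid_word_def)
  then show ?case using Cons by (simp add: ov_comp gen_img_ov)
qed

lemma INVU:
  assumes oX: "ov n X" and oY: "ov n Y" and oX': "ov n X'" and oY': "ov n Y'" and oP: "ov n P" and oQ: "ov n Q"
    and XY: "EE n (rcomp X Y) endo_id" and X'Y': "EE n (rcomp X' Y') endo_id" and Y'X': "EE n (rcomp Y' X') endo_id"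
    and PQ: "EE n (rcomp P Q) endo_id" and QP: "EE n (rcomp Q P) endo_id"
    and c: "EE n X' (rcomp (rcomp Q X) P)"
  shows "EE n Y' (rcomp (rcomp Q Y) P)"
proof -
  have oQX: "ov n (rcomp (rcomp Q X) P)" using oQ oX oP by (simp add: ov_comp)
  have oQY: "ov n (rcomp (rcomp Q Y) P)" using oQ oY oP by (simp add: ov_comp)
  have 1: "EE n (rcomp X' (rcomp (rcomp Q Y) P)) (rcomp (rcomp (rcomp Q X) P) (rcomp (rcomp Q Y) P))"
    by (rule EE_comp_r[OF oQX c])
  have "rcomp (rcomp (rcomp Q X) P) (rcomp (rcomp Q Y) P) = rcomp (rcomp Q X) (rcomp (rcomp P Q) (rcomp Y P))"
    by (simp add: rcomp_assoc)
  moreover have "EE n (rcomp (rcomp Q X) (rcomp (rcomp P Q) (rcomp Y P))) (rcomp (rcomp Q X) (rcomp endo_id (rcomp Y P)))"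
    using oQ oX by (intro EE_comp_l EE_comp_r PQ) (simp_all add: ov_comp)
  moreover have "rcomp (rcomp Q X) (rcomp endo_id (rcomp Y P)) = rcomp Q (rcomp (rcomp X Y) P)"
    by (simp add: rcomp_assoc)
  moreover have "EE n (rcomp Q (rcomp (rcomp X Y) P)) (rcomp Q (rcomp endo_id P))"
    using oQ by (intro EE_comp_l EE_comp_r XY) simp_all
  ultimately have 2: "EE n (rcomp X' (rcomp (rcomp Q Y) P)) endo_id"
    using 1 QP by (auto intro: EE_trans)
  have "EE n Y' (rcomp Y' (rcomp X' (rcomp (rcomp Q Y) P)))"
    using EE_comp_l[OF oY' EE_sym[OF 2]] by simp
  also have "rcomp Y' (rcomp X' (rcomp (rcomp Q Y) P)) = rcomp (rcomp Y' X') (rcomp (rcomp Q Y) P)"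
    by (simp add: rcomp_assoc)
  also have "EE n \<dots> (rcomp endo_id (rcomp (rcomp Q Y) P))"
    by (rule EE_comp_r[OF _ Y'X']) simp
  finally show ?thesis by simp
qed


lemma gen_conj:
  assumes oP: "ov n P" and oQ: "ov n Q" and PQ: "EE n (rcomp P Q) endo_id" and QP: "EE n (rcomp Q P) endo_id"
    and i: "1 \<le> i" "i < n" and j: "1 \<le> j" "j < n"
    and a: "is_aut2 t" and a': "is_aut2 t'"
    and c: "EE n (Tloc j t') (rcomp (rcomp Q (Tloc i t)) P)"
  shows "EE n (Tloc j (inv2 t')) (rcomp (rcomp Q (Tloc i (inv2 t))) P)"
proof (rule INVU[OF _ _ _ _ oP oQ _ _ _ PQ QP c])
  have o: "over2 t" "over2 t'" "over2 (inv2 t)" "over2 (inv2 t')"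
    using a a' by (auto intro: is_aut2_over2 is_inverse2_over[OF inv2_prop])
  show "ov n (Tloc i t)" "ov n (Tloc i (inv2 t))" "ov n (Tloc j t')" "ov n (Tloc j (inv2 t'))"
    using o i j by (auto intro: ov_Tloc)
  show "EE n (rcomp (Tloc i t) (Tloc i (inv2 t))) endo_id" by (rule Tloc_inv[OF inv2_prop[OF a] o(1)])
  show "EE n (rcomp (Tloc j t') (Tloc j (inv2 t'))) endo_id" by (rule Tloc_inv[OF inv2_prop[OF a'] o(2)])
  show "EE n (rcomp (Tloc j (inv2 t')) (Tloc j t')) endo_id"
    by (rule Tloc_inv[OF is_inverse2_sym[OF inv2_prop[OF a'] o(2)] o(4)])
qed

lemma Theta_conj:
  assumes oP: "ov n P" and oQ: "ov n Q" and PQ: "EE n (rcomp P Q) endo_id" and QP: "EE n (rcomp Q P) endo_id"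
    and pi: "\<forall>i\<in>{1..<n}. \<pi> i \<in> {1..<n}"
    and aut: "\<forall>i\<in>{1..<n}. is_aut2 (\<tau> i)" and aut': "\<forall>i\<in>{1..<n}. is_aut2 (\<tau>' i)"
    and gen: "\<forall>i\<in>{1..<n}. EE n (Tloc (\<pi> i) (\<tau>' (\<pi> i))) (rcomp (rcomp Q (Tloc i (\<tau> i))) P)"
  shows "braid_word n \<beta> \<Longrightarrow> EE n (Theta \<tau>' (map (\<lambda>s. (\<pi> (fst s), snd s)) \<beta>)) (rcomp (rcomp Q (Theta \<tau> \<beta>)) P)"
proof (induct \<beta>)
  case Nil then show ?case using EE_sym[OF QP] by simp
next
  case (Cons s \<beta>)
  obtain i b where s: "s = (i, b)" by (cases s)
  have i: "1 \<le> i" "i < n" and bw: "braid_word n \<beta>" using Cons(2) s by (auto simp: braid_word_def)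
  have pii: "1 \<le> \<pi> i" "\<pi> i < n" using pi i by auto
  have ai: "is_aut2 (\<tau> i)" and ai': "is_aut2 (\<tau>' (\<pi> i))" using aut aut' i pii by auto
  have gi: "EE n (Tloc (\<pi> i) (\<tau>' (\<pi> i))) (rcomp (rcomp Q (Tloc i (\<tau> i))) P)" using gen i by auto
  define g where "g = gen_img \<tau> s"
  define g' where "g' = gen_img \<tau>' (\<pi> i, b)"
  have og: "ov n g" unfolding g_def using ai i s by (intro gen_img_ov) simp_all
  have G: "EE n g' (rcomp (rcomp Q g) P)"
  proof (cases b)
    case True then show ?thesis using gi by (simp add: g_def g'_def gen_img_def s)
  next
    case False then show ?thesis
      using gen_conj[OF oP oQ PQ QP i pii ai ai' gi] by (simp add: g_def g'_def gen_img_def s)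
  qed
  have oT: "ov n (Theta \<tau> \<beta>)" by (rule Theta_ov[OF bw aut])
  have oQgP: "ov n (rcomp (rcomp Q g) P)" using oQ og oP by (simp add: ov_comp)
  have IH: "EE n (Theta \<tau>' (map (\<lambda>s. (\<pi> (fst s), snd s)) \<beta>)) (rcomp (rcomp Q (Theta \<tau> \<beta>)) P)"
    by (rule Cons(1)[OF bw])
  have eq0: "Theta \<tau>' (map (\<lambda>s. (\<pi> (fst s), snd s)) (s # \<beta>)) = rcomp g' (Theta \<tau>' (map (\<lambda>s. (\<pi> (fst s), snd s)) \<beta>))"
    by (simp add: g'_def s)
  have "EE n (rcomp g' (Theta \<tau>' (map (\<lambda>s. (\<pi> (fst s), snd s)) \<beta>))) (rcomp (rcomp (rcomp Q g) P) (rcomp (rcomp Q (Theta \<tau> \<beta>)) P))"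
    by (rule EE_comp[OF oQgP G IH])
  also have "rcomp (rcomp (rcomp Q g) P) (rcomp (rcomp Q (Theta \<tau> \<beta>)) P) = rcomp (rcomp Q g) (rcomp (rcomp P Q) (rcomp (Theta \<tau> \<beta>) P))"
    by (simp add: rcomp_assoc)
  also have "EE n \<dots> (rcomp (rcomp Q g) (rcomp endo_id (rcomp (Theta \<tau> \<beta>) P)))"
    using oQ og by (intro EE_comp_l EE_comp_r PQ) (simp_all add: ov_comp)
  also have "rcomp (rcomp Q g) (rcomp endo_id (rcomp (Theta \<tau> \<beta>) P)) = rcomp (rcomp Q (Theta \<tau> (s # \<beta>))) P"
    by (simp add: rcomp_assoc g_def)
  finally show ?case unfolding eq0 .
qed

lemma G_conj:
  assumes oP: "ov n P" and oQ: "ov n Q" and PQ: "EE n (rcomp P Q) endo_id" and QP: "EE n (rcomp Q P) endo_id"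
    and pi: "\<forall>i\<in>{1..<n}. \<pi> i \<in> {1..<n}"
    and aut: "\<forall>i\<in>{1..<n}. is_aut2 (\<tau> i)" and aut': "\<forall>i\<in>{1..<n}. is_aut2 (\<tau>' i)"
    and gen: "\<forall>i\<in>{1..<n}. EE n (Tloc (\<pi> i) (\<tau>' (\<pi> i))) (rcomp (rcomp Q (Tloc i (\<tau> i))) P)"
    and bw: "braid_word n \<beta>"
  shows "G_Theta \<tau>' n (map (\<lambda>s. (\<pi> (fst s), snd s)) \<beta>) \<cong> G_Theta \<tau> n \<beta>"
    and "G_Theta \<tau> n \<beta> \<cong> G_Theta \<tau>' n (map (\<lambda>s. (\<pi> (fst s), snd s)) \<beta>)"
proof -
  have bw': "braid_word n (map (\<lambda>s. (\<pi> (fst s), snd s)) \<beta>)"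
    using bw pi by (auto simp: braid_word_def)
  have c: "EE n (Theta \<tau>' (map (\<lambda>s. (\<pi> (fst s), snd s)) \<beta>)) (rcomp (rcomp Q (Theta \<tau> \<beta>)) P)"
    by (rule Theta_conj[OF oP oQ PQ QP pi aut aut' gen bw])
  have oA: "ov n (Theta \<tau>' (map (\<lambda>s. (\<pi> (fst s), snd s)) \<beta>))" by (rule Theta_ov[OF bw' aut'])
  have oB: "ov n (Theta \<tau> \<beta>)" by (rule Theta_ov[OF bw aut])
  show "G_Theta \<tau>' n (map (\<lambda>s. (\<pi> (fst s), snd s)) \<beta>) \<cong> G_Theta \<tau> n \<beta>"
    unfolding G_Theta_rels by (rule GL[OF oA oB oP oQ PQ QP c])
  have c2: "EE n (Theta \<tau> \<beta>) (rcomp (rcomp P (Theta \<tau>' (map (\<lambda>s. (\<pi> (fst s), snd s)) \<beta>))) Q)"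
  proof -
    have "EE n (rcomp (rcomp P (Theta \<tau>' (map (\<lambda>s. (\<pi> (fst s), snd s)) \<beta>))) Q)
                (rcomp (rcomp P (rcomp (rcomp Q (Theta \<tau> \<beta>)) P)) Q)"
      using oP by (intro EE_comp_r EE_comp_l c) (simp_all add: ov_comp oQ oB)
    also have "rcomp (rcomp P (rcomp (rcomp Q (Theta \<tau> \<beta>)) P)) Q = rcomp (rcomp P Q) (rcomp (Theta \<tau> \<beta>) (rcomp P Q))"
      by (simp add: rcomp_assoc)
    also have "EE n \<dots> (rcomp endo_id (rcomp (Theta \<tau> \<beta>) endo_id))"
      using oB by (intro EE_comp PQ EE_comp_l) (simp_all add: ov_comp)
    finally show ?thesis by (simp add: EE_sym)
  qed
  show "G_Theta \<tau> n \<beta> \<cong> G_Theta \<tau>' n (map (\<lambda>s. (\<pi> (fst s), snd s)) \<beta>)"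
    unfolding G_Theta_rels by (rule GL[OF oB oA oQ oP QP PQ c2])
qed


section \<open>sign flips\<close>

definition fl :: "bool \<Rightarrow> bool \<Rightarrow> word \<Rightarrow> word" where
  "fl e s w = map (\<lambda>l. (fst l, snd l = (if fst l = 0 then e else s))) w"

definition conj :: "bool \<Rightarrow> bool \<Rightarrow> endo2 \<Rightarrow> endo2" where
  "conj e s \<kappa> = (fl e s (if e then fst \<kappa> else inv_word (fst \<kappa>)), fl e s (if s then snd \<kappa> else inv_word (snd \<kappa>)))"

definition Cf :: "(nat \<Rightarrow> bool) \<Rightarrow> nat \<Rightarrow> word" where "Cf \<epsilon> = (\<lambda>j. [(j, \<epsilon> j)])"

lemma Cf_apply[simp]: "Cf \<epsilon> j = [(j, \<epsilon> j)]" by (simp add: Cf_def)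
lemma fl_Nil[simp]: "fl e s [] = []" by (simp add: fl_def)
lemma fl_append[simp]: "fl e s (u @ v) = fl e s u @ fl e s v" by (simp add: fl_def)
lemma fl_inv[simp]: "fl e s (inv_word w) = inv_word (fl e s w)"
  by (induct w) (auto simp: fl_def inv_letter_def)

lemma ov_Cf[simp]: "ov n (Cf \<epsilon>)" by (simp add: ov_def Cf_def)

lemma Cf_Cf[simp]: "rcomp (Cf \<epsilon>) (Cf \<epsilon>) = endo_id"
  by (auto simp: rcomp_def Cf_def endo_id_def fun_eq_iff)

lemma Cf_sh: "word_over {0,1} w \<Longrightarrow> subst (Cf \<epsilon>) (subst (sh i) w) = subst (sh i) (fl (\<epsilon> i) (\<epsilon> (Suc i)) w)"
proof (induct w)
  case (Cons x w)
  obtain k b where x: "x = (k, b)" by (cases x)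
  have "k = 0 \<or> k = 1" using Cons(2) x by auto
  then show ?case using Cons x by (auto simp: subst_subst sh_def Cf_def fl_def)
qed simp

lemma over_fl[simp]: "word_over S (fl e s w) = word_over S w"
  by (simp add: fl_def word_over_def)

lemma over2_conj: "over2 \<kappa> \<Longrightarrow> over2 (conj e s \<kappa>)"
  by (simp add: over2_def conj_def)

lemma Cf_conj: assumes k: "over2 \<kappa>"
  shows "rcomp (rcomp (Cf \<epsilon>) (Tloc i \<kappa>)) (Cf \<epsilon>) = Tloc i (conj (\<epsilon> i) (\<epsilon> (Suc i)) \<kappa>)"
proof
  fix j
  have k1: "word_over {0,1} (fst \<kappa>)" "word_over {0,1} (snd \<kappa>)" using k by (auto simp: over2_def)
  show "rcomp (rcomp (Cf \<epsilon>) (Tloc i \<kappa>)) (Cf \<epsilon>) j = Tloc i (conj (\<epsilon> i) (\<epsilon> (Suc i)) \<kappa>) j"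
  proof (cases "j = i")
    case True
    then show ?thesis using k1 Cf_sh[of "fst \<kappa>" \<epsilon> i] Cf_sh[of "inv_word (fst \<kappa>)" \<epsilon> i]
      by (simp add: rcomp_def Tloc_at conj_def)
  next
    case False
    show ?thesis
    proof (cases "j = Suc i")
      case True
      then show ?thesis using k1 Cf_sh[of "snd \<kappa>" \<epsilon> i] Cf_sh[of "inv_word (snd \<kappa>)" \<epsilon> i] \<open>j \<noteq> i\<close>
        by (simp add: rcomp_def Tloc_at1 conj_def)
    next
      case False
      then show ?thesis using \<open>j \<noteq> i\<close> by (simp add: rcomp_def Tloc_other)
    qed
  qed
qed

section \<open>the flip D\<close>

definition Df :: "nat \<Rightarrow> nat \<Rightarrow> word" where "Df n = (\<lambda>j. [(n + 1 - j, False)])"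

definition th :: "word \<Rightarrow> word" where "th w = map (\<lambda>l. (1 - fst l, \<not> snd l)) w"

definition thh :: "endo2 \<Rightarrow> endo2" where
  "thh \<kappa> = (th (inv_word (snd \<kappa>)), th (inv_word (fst \<kappa>)))"

lemma ov_Df[simp]: "ov n (Df n)" by (auto simp: ov_def Df_def)

lemma Df_Df: "EE n (rcomp (Df n) (Df n)) endo_id"
  by (auto simp: EE_def rcomp_def Df_def endo_id_def)

lemma th_Nil[simp]: "th [] = []" by (simp add: th_def)
lemma th_append[simp]: "th (u @ v) = th u @ th v" by (simp add: th_def)
lemma th_inv[simp]: "th (inv_word w) = inv_word (th w)"
  by (induct w) (auto simp: th_def inv_letter_def)

lemma over_th: "word_over {0,1} w \<Longrightarrow> word_over {0,1} (th w)"
  by (auto simp: th_def word_over_def)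

lemma over2_thh: "over2 \<kappa> \<Longrightarrow> over2 (thh \<kappa>)"
  unfolding over2_def thh_def
  using over_th[of "inv_word (snd \<kappa>)"] over_th[of "inv_word (fst \<kappa>)"] by simp

lemma Df_sh: "word_over {0,1} w \<Longrightarrow> 1 \<le> i \<Longrightarrow> i < n \<Longrightarrow> subst (Df n) (subst (sh i) w) = subst (sh (n - i)) (th w)"
proof (induct w)
  case (Cons x w)
  obtain k b where x: "x = (k, b)" by (cases x)
  have "k = 0 \<or> k = 1" using Cons(2) x by auto
  then show ?case using Cons x by (auto simp: subst_subst sh_def Df_def th_def)
qed simp

lemma Df_conj: assumes k: "over2 \<kappa>" and i: "1 \<le> i" "i < n"
  shows "EE n (rcomp (rcomp (Df n) (Tloc i \<kappa>)) (Df n)) (Tloc (n - i) (thh \<kappa>))"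
  unfolding EE_def
proof
  fix j assume j: "j \<in> {1..n}"
  have k1: "word_over {0,1} (fst \<kappa>)" "word_over {0,1} (snd \<kappa>)" using k by (auto simp: over2_def)
  have "rcomp (rcomp (Df n) (Tloc i \<kappa>)) (Df n) j = Tloc (n - i) (thh \<kappa>) j"
  proof (cases "n + 1 - j = i")
    case True
    then have jj: "j = Suc (n - i)" using j i by auto
    show ?thesis using True k1 Df_sh[of "inv_word (fst \<kappa>)" i n] i jj
      by (simp add: rcomp_def Df_def Tloc_at Tloc_at1 thh_def)
  next
    case False
    show ?thesis
    proof (cases "n + 1 - j = Suc i")
      case True
      then have jj: "j = n - i" using j i by auto
      show ?thesis using True k1 Df_sh[of "inv_word (snd \<kappa>)" i n] i jj
        by (simp add: rcomp_def Df_def Tloc_at Tloc_at1 thh_def)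
    next
      case False
      have "j \<noteq> n - i" "j \<noteq> Suc (n - i)" using False \<open>n + 1 - j \<noteq> i\<close> j i by auto
      then show ?thesis using False \<open>n + 1 - j \<noteq> i\<close> j
        by (simp add: rcomp_def Df_def Tloc_other)
    qed
  qed
  then show "reduce (rcomp (rcomp (Df n) (Tloc i \<kappa>)) (Df n) j) = reduce (Tloc (n - i) (thh \<kappa>) j)" by simp
qed


section \<open>Garside element\<close>

fun cw :: "nat \<Rightarrow> nat list" where
  "cw 0 = []"
| "cw (Suc m) = Suc m # cw m"

fun delta :: "nat \<Rightarrow> nat list" where
  "delta 0 = []"
| "delta (Suc m) = delta m @ cw m"

lemma set_cw: "set (cw m) = {1..m}"
  by (induct m) auto

lemma set_delta: "set (delta m) \<subseteq> {1..<m}"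
  by (induct m) (auto simp: set_cw)

definition pos :: "nat list \<Rightarrow> (nat \<times> bool) list" where
  "pos ks = map (\<lambda>k. (k, True)) ks"

lemma pos_simps[simp]: "pos [] = []" "pos (k # ks) = (k, True) # pos ks" "pos (ks @ ls) = pos ks @ pos ls"
  by (simp_all add: pos_def)

definition pw :: "nat \<Rightarrow> nat list \<Rightarrow> bool" where
  "pw n ks \<longleftrightarrow> (\<forall>k\<in>set ks. 1 \<le> k \<and> k < n)"

lemma pw_simps[simp]: "pw n [] = True" "pw n (k # ks) = (1 \<le> k \<and> k < n \<and> pw n ks)"
  "pw n (ks @ ls) = (pw n ks \<and> pw n ls)"
  by (auto simp: pw_def)

lemma pw_bw: "pw n ks \<Longrightarrow> braid_word n (pos ks)"
  by (auto simp: pw_def braid_word_def pos_def)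

lemma pw_cw: "m < n \<Longrightarrow> pw n (cw m)"
  by (auto simp: pw_def set_cw)

lemma pw_delta: "m \<le> n \<Longrightarrow> pw n (delta m)"
  using set_delta[of m] by (auto simp: pw_def)

locale lrep =
  fixes n :: nat and \<tau> :: "nat \<Rightarrow> endo2"
  assumes lr: "local_rep n \<tau>"
begin

lemma aut: "\<forall>i\<in>{1..<n}. is_aut2 (\<tau> i)" using lr by (simp add: local_rep_def)

definition R :: "nat list \<Rightarrow> nat list \<Rightarrow> bool" where
  "R ks ls \<longleftrightarrow> pw n ks \<and> pw n ls \<and> EE n (Theta \<tau> (pos ks)) (Theta \<tau> (pos ls))"

lemma ovp: "pw n ks \<Longrightarrow> ov n (Theta \<tau> (pos ks))"
  by (rule Theta_ov[OF pw_bw aut])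

lemma R_refl: "pw n ks \<Longrightarrow> R ks ks" by (simp add: R_def)
lemma R_sym: "R ks ls \<Longrightarrow> R ls ks" by (simp add: R_def EE_sym)
lemma R_trans[trans]: "R ks ls \<Longrightarrow> R ls ms \<Longrightarrow> R ks ms" by (auto simp: R_def intro: EE_trans)

lemma R_cong: assumes r: "R ks ls" and a: "pw n a" and b: "pw n b"
  shows "R (a @ ks @ b) (a @ ls @ b)"
proof -
  have p: "pw n ks" "pw n ls" and e: "EE n (Theta \<tau> (pos ks)) (Theta \<tau> (pos ls))" using r by (auto simp: R_def)
  have "EE n (rcomp (Theta \<tau> (pos a)) (rcomp (Theta \<tau> (pos ks)) (Theta \<tau> (pos b))))
             (rcomp (Theta \<tau> (pos a)) (rcomp (Theta \<tau> (pos ls)) (Theta \<tau> (pos b))))"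
    by (intro EE_comp_l EE_comp_r e ovp a p)
  then show ?thesis using p a b by (simp add: R_def Theta_append)
qed

lemma R_cong_l: "R ks ls \<Longrightarrow> pw n a \<Longrightarrow> R (a @ ks) (a @ ls)"
  using R_cong[of ks ls a "[]"] by simp
lemma R_cong_r: "R ks ls \<Longrightarrow> pw n b \<Longrightarrow> R (ks @ b) (ls @ b)"
  using R_cong[of ks ls "[]" b] by simp

lemma R_comm: "1 \<le> i \<Longrightarrow> i < n \<Longrightarrow> 1 \<le> j \<Longrightarrow> j < n \<Longrightarrow> i + 2 \<le> j \<or> j + 2 \<le> i \<Longrightarrow> R [i, j] [j, i]"
proof -
  assume i: "1 \<le> i" "i < n" and j: "1 \<le> j" "j < n" and d: "i + 2 \<le> j \<or> j + 2 \<le> i"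
  have c: "\<forall>i\<in>{1..<n}. \<forall>j\<in>{1..<n}. i + 2 \<le> j \<longrightarrow>
        EE n (rcomp (Tloc i (\<tau> i)) (Tloc j (\<tau> j))) (rcomp (Tloc j (\<tau> j)) (Tloc i (\<tau> i)))"
    using lr by (simp add: local_rep_def endo_eq_EE)
  show ?thesis using d
  proof
    assume "i + 2 \<le> j" then show ?thesis using c i j by (auto simp: R_def gen_img_def)
  next
    assume "j + 2 \<le> i" then show ?thesis using c i j by (auto simp: R_def gen_img_def intro: EE_sym)
  qed
qed

lemma R_braid: "1 \<le> i \<Longrightarrow> i + 1 < n \<Longrightarrow> R [i, Suc i, i] [Suc i, i, Suc i]"
proof -
  assume i: "1 \<le> i" "i + 1 < n"
  have c: "\<forall>i\<in>{1..<n}. i + 1 < n \<longrightarrow>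
        EE n (rcomp (rcomp (Tloc i (\<tau> i)) (Tloc (i+1) (\<tau> (i+1)))) (Tloc i (\<tau> i)))
                  (rcomp (rcomp (Tloc (i+1) (\<tau> (i+1))) (Tloc i (\<tau> i))) (Tloc (i+1) (\<tau> (i+1))))"
    using lr by (simp add: local_rep_def endo_eq_EE)
  then show ?thesis using i by (auto simp: R_def gen_img_def rcomp_assoc)
qed

lemma R_comm_word: "1 \<le> k \<Longrightarrow> k < n \<Longrightarrow> pw n w \<Longrightarrow> (\<forall>x\<in>set w. x + 2 \<le> k \<or> k + 2 \<le> x) \<Longrightarrow> R (k # w) (w @ [k])"
proof (induct w)
  case Nil then show ?case by (simp add: R_refl)
next
  case (Cons x w)
  have 1: "R ([] @ [k, x] @ w) ([] @ [x, k] @ w)"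
    using Cons by (intro R_cong R_comm) auto
  have 2: "R ([x] @ (k # w)) ([x] @ (w @ [k]))"
    using Cons by (intro R_cong_l) auto
  show ?case using R_trans[OF 1[simplified] 2[simplified]] by simp
qed

lemma L1: "1 \<le> j \<Longrightarrow> j < m \<Longrightarrow> m < n \<Longrightarrow> R (j # cw m) (cw m @ [Suc j])"
proof (induct m)
  case 0 then show ?case by simp
next
  case (Suc m')
  show ?case
  proof (cases "j = m'")
    case True
    obtain p where p: "j = Suc p" using Suc(2) by (cases j) auto
    have cw: "cw (Suc m') = Suc j # j # cw p" by (simp add: True[symmetric] p)
    have pc: "pw n (cw p)" using Suc(4) p True by (intro pw_cw) simp
    have 1: "R ([] @ [j, Suc j, j] @ cw p) ([] @ [Suc j, j, Suc j] @ cw p)"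
      using Suc True pc by (intro R_cong R_braid) auto
    have 2: "R ([Suc j, j] @ (Suc j # cw p)) ([Suc j, j] @ (cw p @ [Suc j]))"
      using Suc True pc p by (intro R_cong_l R_comm_word) (auto simp: set_cw)
    have cwj: "cw j = j # cw p" using p by simp
    show ?thesis using R_trans[OF 1[simplified] 2[simplified]] cw cwj by simp
  next
    case False
    then have jm: "j < m'" using Suc by simp
    have 1: "R ([] @ [j, Suc m'] @ cw m') ([] @ [Suc m', j] @ cw m')"
      using Suc jm by (intro R_cong R_comm pw_cw) auto
    have 2: "R ([Suc m'] @ (j # cw m')) ([Suc m'] @ (cw m' @ [Suc j]))"
      using Suc jm by (intro R_cong_l Suc(1)) auto
    show ?thesis using R_trans[OF 1[simplified] 2[simplified]] by simp
  qed
qed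

lemma L2: "1 \<le> m \<Longrightarrow> m < n \<Longrightarrow> R (cw m @ cw m) (cw (m - 1) @ cw m @ [1])"
proof (induct m)
  case 0 then show ?case by simp
next
  case (Suc m')
  show ?case
  proof (cases m')
    case 0 then show ?thesis using Suc by (simp add: R_refl)
  next
    case (Suc p)
    let ?m = "Suc (Suc p)"
    have m': "m' = Suc p" by fact
    have lt: "?m < n" using Suc.prems m' by simp
    have pc: "pw n (cw p)" using lt by (intro pw_cw) simp
    have cm: "cw ?m = ?m # Suc p # cw p" by simp
    have a: "R ([?m, Suc p] @ (?m # cw p) @ (Suc p # cw p)) ([?m, Suc p] @ (cw p @ [?m]) @ (Suc p # cw p))"
      using lt pc by (intro R_cong R_comm_word) (auto simp: set_cw)
    have b: "R ([] @ [Suc p, ?m, Suc p] @ (cw p @ Suc p # cw p)) ([] @ [?m, Suc p, ?m] @ (cw p @ Suc p # cw p))"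
      using lt pc by (intro R_cong R_braid) auto
    have ih: "R (cw (Suc p) @ cw (Suc p)) (cw p @ cw (Suc p) @ [1])"
      using Suc.hyps lt m' by simp
    have c: "R ([Suc p, ?m] @ (cw (Suc p) @ cw (Suc p)) @ []) ([Suc p, ?m] @ (cw p @ cw (Suc p) @ [1]) @ [])"
      using lt by (intro R_cong ih) auto
    have d: "R ([Suc p] @ (?m # cw p) @ (cw (Suc p) @ [1])) ([Suc p] @ (cw p @ [?m]) @ (cw (Suc p) @ [1]))"
      using lt pc by (intro R_cong R_comm_word pw_cw) (auto simp: set_cw)
    have "R (cw ?m @ cw ?m) ([?m, Suc p] @ (?m # cw p) @ (Suc p # cw p))"
      using R_sym[OF a] by simp
    also have "R \<dots> ([Suc p, ?m, Suc p] @ (cw p @ Suc p # cw p))"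
      using R_sym[OF b] by simp
    also have "R \<dots> ([Suc p, ?m] @ (cw p @ cw (Suc p) @ [1]))"
      using c by simp
    also have "R \<dots> ([Suc p] @ (cw p @ [?m]) @ (cw (Suc p) @ [1]))"
      using d by simp
    finally show ?thesis using m' by simp
  qed
qed

lemma Delta_comm: "m \<le> n \<Longrightarrow> 1 \<le> i \<Longrightarrow> i < m \<Longrightarrow> R (i # delta m) (delta m @ [m - i])"
proof (induct m arbitrary: i)
  case 0 then show ?case by simp
next
  case (Suc m')
  have pd: "pw n (delta m')" using Suc by (intro pw_delta) simp
  have pc: "pw n (cw m')" using Suc by (intro pw_cw) simp
  show ?case
  proof (cases "i < m'")
    case True
    have 1: "R ([] @ (i # delta m') @ cw m') ([] @ (delta m' @ [m' - i]) @ cw m')"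
      using Suc True pc by (intro R_cong Suc(1)) auto
    have 2: "R (delta m' @ ((m' - i) # cw m') @ []) (delta m' @ (cw m' @ [Suc (m' - i)]) @ [])"
      using Suc True pd by (intro R_cong L1) auto
    have "Suc m' - i = Suc (m' - i)" using True by simp
    then show ?thesis using R_trans[OF 1[simplified] 2[simplified]] by simp
  next
    case False
    then have im: "i = m'" using Suc by simp
    show ?thesis
    proof (cases "m' = 1")
      case True
      then have i1: "i = 1" and m1: "m' = 1" using im by simp_all
      have "R [1, 1] [1, 1]" using Suc.prems m1 by (intro R_refl) simp
      then show ?thesis unfolding i1 m1 by (simp add: numeral_2_eq_2)
    next
      case False
      obtain p where p: "m' = Suc p" "1 \<le> p" using False im Suc(3) by (cases m') auto
      have pd': "pw n (delta p)" using Suc p by (intro pw_delta) simp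
      have 1: "R ([] @ (m' # delta p) @ (cw p @ cw m')) ([] @ (delta p @ [m']) @ (cw p @ cw m'))"
        using Suc p pc pd' set_delta[of p] by (intro R_cong R_comm_word pw_cw) (auto simp: pw_def)
      have 2: "R (delta p @ (cw m' @ cw m') @ []) (delta p @ (cw (m' - 1) @ cw m' @ [1]) @ [])"
        using Suc p pd' by (intro R_cong L2) auto
      have cwm: "cw m' = m' # cw p" using p by simp
      have h1: "R (m' # delta p @ cw p @ m' # cw p) (delta p @ m' # cw p @ m' # cw p)"
        using 1 cwm by simp
      have h2: "R (delta p @ m' # cw p @ m' # cw p) (delta p @ cw p @ m' # cw p @ [1])"
        using 2 cwm p by simp
      show ?thesis using R_trans[OF h1 h2] im p cwm by simp
    qed
  qed
qed

end


definition invw :: "(nat \<times> bool) list \<Rightarrow> (nat \<times> bool) list" where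
  "invw w = rev (map (\<lambda>s. (fst s, \<not> snd s)) w)"

lemma invw_simps[simp]: "invw [] = []" "invw (s # w) = invw w @ [(fst s, \<not> snd s)]"
  by (simp_all add: invw_def)

lemma invw_invw[simp]: "invw (invw w) = w"
  by (induct w) (simp_all add: invw_def rev_map)

lemma bw_invw: "braid_word n w \<Longrightarrow> braid_word n (invw w)"
  by (auto simp: braid_word_def invw_def)

lemma gen_img_inv:
  assumes a: "is_aut2 (\<tau> (fst s))"
  shows "EE n (rcomp (gen_img \<tau> s) (gen_img \<tau> (fst s, \<not> snd s))) endo_id"
proof (cases "snd s")
  case True
  then show ?thesis using Tloc_inv[OF inv2_prop[OF a] is_aut2_over2[OF a]] by (simp add: gen_img_def)
next
  case False
  have o: "over2 (inv2 (\<tau> (fst s)))" by (rule is_inverse2_over[OF inv2_prop[OF a]])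
  show ?thesis using False Tloc_inv[OF is_inverse2_sym[OF inv2_prop[OF a] is_aut2_over2[OF a]] o]
    by (simp add: gen_img_def)
qed

lemma Theta_invw:
  assumes aut: "\<forall>i\<in>{1..<n}. is_aut2 (\<tau> i)"
  shows "braid_word n \<beta> \<Longrightarrow> EE n (rcomp (Theta \<tau> \<beta>) (Theta \<tau> (invw \<beta>))) endo_id"
proof (induct \<beta>)
  case Nil then show ?case by simp
next
  case (Cons s \<beta>)
  have bw: "braid_word n \<beta>" and i: "1 \<le> fst s" "fst s < n" using Cons(2) by (auto simp: braid_word_def)
  have a: "is_aut2 (\<tau> (fst s))" using aut i by auto
  define g where "g = gen_img \<tau> s"
  define g' where "g' = gen_img \<tau> (fst s, \<not> snd s)"
  have og: "ov n g" unfolding g_def using a i by (intro gen_img_ov) simp_all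
  have eq0: "rcomp (Theta \<tau> (s # \<beta>)) (Theta \<tau> (invw (s # \<beta>))) = rcomp g (rcomp (rcomp (Theta \<tau> \<beta>) (Theta \<tau> (invw \<beta>))) g')"
    by (simp add: Theta_append rcomp_assoc g_def g'_def)
  have "EE n (rcomp g (rcomp (rcomp (Theta \<tau> \<beta>) (Theta \<tau> (invw \<beta>))) g')) (rcomp g (rcomp endo_id g'))"
  proof (rule EE_comp_l[OF og])
    show "EE n (rcomp (rcomp (Theta \<tau> \<beta>) (Theta \<tau> (invw \<beta>))) g') (rcomp endo_id g')"
      by (rule EE_comp_r[OF _ Cons(1)[OF bw]]) simp
  qed
  also have "rcomp g (rcomp endo_id g') = rcomp g g'" by simp
  also have "EE n \<dots> endo_id" unfolding g_def g'_def by (rule gen_img_inv[where \<tau>=\<tau> and s=s, OF a])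
  finally show ?case unfolding eq0 .
qed

context lrep
begin

definition Ed where "Ed = Theta \<tau> (pos (delta n))"
definition Edi where "Edi = Theta \<tau> (invw (pos (delta n)))"

lemma bw_delta: "braid_word n (pos (delta n))" by (rule pw_bw[OF pw_delta]) simp

lemma ov_Ed: "ov n Ed" unfolding Ed_def by (rule Theta_ov[OF bw_delta aut])
lemma ov_Edi: "ov n Edi" unfolding Edi_def by (rule Theta_ov[OF bw_invw[OF bw_delta] aut])
lemma Ed_Edi: "EE n (rcomp Ed Edi) endo_id" unfolding Ed_def Edi_def by (rule Theta_invw[OF aut bw_delta])
lemma Edi_Ed: "EE n (rcomp Edi Ed) endo_id"
  using Theta_invw[OF aut bw_invw[OF bw_delta]] unfolding Ed_def Edi_def by simp

lemma Ed_gen: assumes i: "1 \<le> i" "i < n"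
  shows "EE n (Tloc (n - i) (\<tau> (n - i))) (rcomp (rcomp Edi (Tloc i (\<tau> i))) Ed)"
proof -
  have "R (i # delta n) (delta n @ [n - i])" using i by (intro Delta_comm) simp_all
  then have c: "EE n (rcomp (Tloc i (\<tau> i)) Ed) (rcomp Ed (Tloc (n - i) (\<tau> (n - i))))"
    by (simp add: R_def Theta_append Ed_def gen_img_def)
  have oT: "ov n (Tloc i (\<tau> i))" using aut i by (intro ov_Tloc is_aut2_over2) auto
  have eq0: "rcomp (rcomp Edi (Tloc i (\<tau> i))) Ed = rcomp Edi (rcomp (Tloc i (\<tau> i)) Ed)" by (simp add: rcomp_assoc)
  have "EE n (rcomp Edi (rcomp (Tloc i (\<tau> i)) Ed)) (rcomp Edi (rcomp Ed (Tloc (n - i) (\<tau> (n - i)))))"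
    by (rule EE_comp_l[OF ov_Edi c])
  also have "\<dots> = rcomp (rcomp Edi Ed) (Tloc (n - i) (\<tau> (n - i)))" by (simp add: rcomp_assoc)
  also have "EE n \<dots> (rcomp endo_id (Tloc (n - i) (\<tau> (n - i))))"
    by (rule EE_comp_r[OF _ Edi_Ed]) simp
  finally have "EE n (rcomp Edi (rcomp (Tloc i (\<tau> i)) Ed)) (rcomp endo_id (Tloc (n - i) (\<tau> (n - i))))" .
  then show ?thesis unfolding eq0 rcomp_id_l by (rule EE_sym)
qed

lemma G_flip:
  assumes bw: "braid_word n \<beta>"
  shows "G_Theta \<tau> n (map (\<lambda>s. (n - fst s, snd s)) \<beta>) \<cong> G_Theta \<tau> n \<beta>"
    and "G_Theta \<tau> n \<beta> \<cong> G_Theta \<tau> n (map (\<lambda>s. (n - fst s, snd s)) \<beta>)"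
proof -
  have pi: "\<forall>i\<in>{1..<n}. (\<lambda>i. n - i) i \<in> {1..<n}" by auto
  have gen: "\<forall>i\<in>{1..<n}. EE n (Tloc ((\<lambda>i. n - i) i) (\<tau> ((\<lambda>i. n - i) i))) (rcomp (rcomp Edi (Tloc i (\<tau> i))) Ed)"
  proof
    fix i assume "i \<in> {1..<n}"
    then show "EE n (Tloc ((\<lambda>i. n - i) i) (\<tau> ((\<lambda>i. n - i) i))) (rcomp (rcomp Edi (Tloc i (\<tau> i))) Ed)"
      using Ed_gen[of i] by simp
  qed
  show "G_Theta \<tau> n (map (\<lambda>s. (n - fst s, snd s)) \<beta>) \<cong> G_Theta \<tau> n \<beta>"
    using G_conj(1)[where \<pi>="\<lambda>i. n - i" and \<tau>=\<tau> and \<tau>'=\<tau>, OF ov_Ed ov_Edi Ed_Edi Edi_Ed pi aut aut gen bw] by simp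
  show "G_Theta \<tau> n \<beta> \<cong> G_Theta \<tau> n (map (\<lambda>s. (n - fst s, snd s)) \<beta>)"
    using G_conj(2)[where \<pi>="\<lambda>i. n - i" and \<tau>=\<tau> and \<tau>'=\<tau>, OF ov_Ed ov_Edi Ed_Edi Edi_Ed pi aut aut gen bw] by simp
qed

end


definition swapP :: "endo2 \<Rightarrow> endo2" where "swapP k = (swap_letters (snd k), swap_letters (fst k))"
definition backP :: "endo2 \<Rightarrow> endo2" where "backP k = (rev (fst k), rev (snd k))"

lemma sw_Nil[simp]: "swap_letters [] = []" by (simp add: swap_letters_def)
lemma sw_append[simp]: "swap_letters (u @ v) = swap_letters u @ swap_letters v" by (simp add: swap_letters_def)
lemma sw_inv[simp]: "swap_letters (inv_word w) = inv_word (swap_letters w)"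
  by (induct w) (auto simp: swap_letters_def inv_letter_def)
lemma sw_fl: "swap_letters (fl x y w) = fl y x (swap_letters w)"
  by (induct w) (auto simp: swap_letters_def fl_def)
lemma rev_fl: "rev (fl x y w) = fl x y (rev w)" by (simp add: fl_def rev_map)
lemma rev_inv: "rev (inv_word w) = inv_word (rev w)" by (simp add: inv_word_def rev_map)

lemma swapP_conj: "swapP (conj x y k) = conj y x (swapP k)"
  by (cases x; cases y) (simp_all add: swapP_def conj_def sw_fl)

lemma backP_conj: "backP (conj x y k) = conj x y (backP k)"
  by (cases x; cases y) (simp_all add: backP_def conj_def rev_fl rev_inv)

lemma fl_fl: "fl x y (fl u v w) = fl (x = u) (y = v) w"
  by (induct w) (auto simp: fl_def)

lemma conj_conj: "conj x y (conj u v k) = conj (x = u) (y = v) k"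
  by (cases x; cases y; cases u; cases v) (simp_all add: conj_def fl_fl)

lemma fl_FF_inv: "fl False False (inv_word w) = rev w"
  by (induct w) (auto simp: fl_def inv_word_def inv_letter_def)

lemma inv_fl_FF: "inv_word (fl False False w) = rev w"
  using fl_FF_inv[of w] by simp

lemma backP_conjFF: "backP k = conj False False k"
  by (simp add: backP_def conj_def inv_fl_FF)

lemma th_sw: "th w = swap_letters (fl False False w)"
  by (induct w) (auto simp: th_def swap_letters_def fl_def)

lemma thh_sb: "thh k = swapP (backP k)"
  by (simp add: thh_def swapP_def backP_def th_sw inv_fl_FF[symmetric])

lemma sw_sw: "word_over {0,1} w \<Longrightarrow> swap_letters (swap_letters w) = w"
  by (induct w) (auto simp: swap_letters_def)

lemma swapP_swapP: "over2 k \<Longrightarrow> swapP (swapP k) = k"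
  by (simp add: swapP_def over2_def sw_sw)

lemma backP_backP[simp]: "backP (backP k) = k" by (simp add: backP_def)

lemma swapP_backP: "swapP (backP k) = backP (swapP k)"
  by (simp add: swapP_def backP_def swap_letters_def rev_map)

lemma thh_thh: "over2 k \<Longrightarrow> thh (thh k) = k"
  by (simp add: thh_sb swapP_backP swapP_swapP)

lemma swapP_b: "over2 k \<Longrightarrow> swapP k = conj False False (thh k)"
  by (simp add: thh_sb swapP_backP backP_conjFF[symmetric])

lemma over2_backP: "over2 k \<Longrightarrow> over2 (backP k)"
  by (auto simp: over2_def backP_def word_over_def)

lemma swapP_thh: "over2 k \<Longrightarrow> swapP (thh k) = conj False False k"
  unfolding thh_sb using swapP_swapP[OF over2_backP, of k] by (simp add: backP_conjFF)

lemma fl_Cons: "fl x y ((k, b) # w) = (k, b = (if k = 0 then x else y)) # fl x y w"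
  by (simp add: fl_def)

lemma endo2_fun_conj: "endo2_fun (conj x y g) k = fl x y (if (if k = 0 then x else y) then endo2_fun g k else inv_word (endo2_fun g k))"
  by (simp add: endo2_fun_def conj_def)

lemma subst_fl: "subst (endo2_fun (conj x y g)) (fl x y w) = fl x y (subst (endo2_fun g) w)"
proof (induct w)
  case (Cons l w)
  obtain k b where l: "l = (k, b)" by (cases l)
  show ?case using Cons unfolding l
    by (cases b; cases "if k = 0 then x else y") (simp_all add: fl_Cons endo2_fun_conj del: fl_inv add: fl_inv[symmetric])
qed simp

lemma fe_fl: "reduce u = reduce v \<Longrightarrow> reduce (fl x y u) = reduce (fl x y v)"
proof -
  have aux: "pres_eq UNIV {} u v \<Longrightarrow> pres_eq UNIV {} (fl x y u) (fl x y v)" for u v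
  proof (induct rule: pres_eq.induct)
    case (cancel z u v)
    have "fl x y (u @ [z, inv_letter z] @ v) = fl x y u @ [hd (fl x y [z]), inv_letter (hd (fl x y [z]))] @ fl x y v"
      by (auto simp: fl_def inv_letter_def)
    then show ?case using pres_eq.cancel[of "hd (fl x y [z])" UNIV "{}" "fl x y u" "fl x y v"] by simp
  next
    case (refl w) show ?case by (rule pres_eq.refl)
  next
    case (sym u v) from sym(2) show ?case by (rule pres_eq.sym)
  next
    case (trans u v w) from trans(2,4) show ?case by (rule pres_eq.trans)
  next
    case (rel r u v) then show ?case by simp
  qed
  assume "reduce u = reduce v" then show ?thesis by (simp add: fe_iff aux)
qed

lemma fl_single: "fl x y [(k, True)] = (if (if k = 0 then x else y) then [(k, True)] else inv_word [(k, True)])"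
  by (auto simp: fl_def)

lemma is_inverse2_conj: assumes g: "is_inverse2 k g" and k: "over2 k"
  shows "is_inverse2 (conj x y k) (conj x y g)"
proof -
  have go: "over2 g" by (rule is_inverse2_over[OF g])
  have main: "reduce (subst (endo2_fun (conj x y g)) (endo2_fun (conj x y k) j)) = [(j, True)]"
    if gk: "is_inverse2 k g" and ko: "over2 k" and j: "j \<in> {0,1}" for k g j
  proof -
    have go: "over2 g" by (rule is_inverse2_over[OF gk])
    have e: "reduce (subst (endo2_fun g) (endo2_fun k j)) = [(j, True)]" using gk j by (auto simp: is_inverse2_def)
    have wo: "word_over {0,1} (endo2_fun k j)" using ko j by (auto simp: over2_def endo2_fun_def)
    define X where "X = (if j = 0 then x else y)"
    have ck: "endo2_fun (conj x y k) j = fl x y (if X then endo2_fun k j else inv_word (endo2_fun k j))"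
      using j by (auto simp: conj_def endo2_fun_def X_def)
    have "subst (endo2_fun (conj x y g)) (endo2_fun (conj x y k) j) =
          fl x y (if X then subst (endo2_fun g) (endo2_fun k j) else inv_word (subst (endo2_fun g) (endo2_fun k j)))"
      unfolding ck by (auto simp: subst_fl)
    also have "reduce \<dots> = reduce (fl x y (if X then [(j, True)] else inv_word [(j, True)]))"
      by (intro fe_fl) (auto intro: fe_inv simp: e[symmetric])
    also have "\<dots> = [(j, True)]" using j by (auto simp: X_def fl_def)
    finally show ?thesis .
  qed
  show ?thesis
    unfolding is_inverse2_def
    using main[OF g k] main[OF is_inverse2_sym[OF g k] go] go k
    by (auto simp: over2_def conj_def)
qed

lemma inverse_unique: assumes g: "is_inverse2 t g" and h: "is_inverse2 t h" and t: "over2 t"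
  shows "reduce (fst g) = reduce (fst h) \<and> reduce (snd g) = reduce (snd h)"
proof -
  have key: "reduce (endo2_fun h k) = reduce (endo2_fun g k)" if k: "k \<in> {0,1}" for k
  proof -
    have ho: "word_over {0,1} (endo2_fun h k)" using is_inverse2_over[OF h] k by (auto simp: over2_def endo2_fun_def)
    have 1: "reduce (subst (endo2_fun t) (endo2_fun h k)) = reduce [(k, True)]" using h k by (auto simp: is_inverse2_def)
    have "reduce (subst (endo2_fun g) (subst (endo2_fun t) (endo2_fun h k))) = reduce (subst (endo2_fun g) [(k, True)])"
      by (rule fe_subst[OF 1])
    moreover have "reduce (subst (endo2_fun g) (subst (endo2_fun t) (endo2_fun h k))) = reduce (subst (\<lambda>j. [(j, True)]) (endo2_fun h k))"
      unfolding subst_subst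
    proof (rule fe_subst_cong)
      fix j assume "j \<in> fst ` set (endo2_fun h k)"
      then have "j \<in> {0,1}" using ho by (auto simp: word_over_def)
      then show "reduce (subst (endo2_fun g) (endo2_fun t j)) = reduce [(j, True)]"
        using g by (auto simp: is_inverse2_def)
    qed
    ultimately show ?thesis by simp
  qed
  show ?thesis using key[of 0] key[of 1] by (simp add: endo2_fun_def)
qed

lemma reduced_map: assumes inj: "inj h" and c: "\<And>l. h (inv_letter l) = inv_letter (h l)"
  shows "reduced (map h w) = reduced w"
proof (induct w rule: reduced.induct)
  case (3 x y ys)
  have "(h y = inv_letter (h x)) = (y = inv_letter x)"
    using inj c[of x] by (metis injD)
  then show ?case using 3 by simp
qed simp_all

lemma reduced_fl: "reduced (fl x y w) = reduced w"
  unfolding fl_def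
  by (rule reduced_map) (auto simp: inj_def inv_letter_def)

lemma reduced_append_single: "reduced (w @ [a, b]) = (reduced (w @ [a]) \<and> b \<noteq> inv_letter a)"
  by (induct w rule: reduced.induct) auto

lemma reduced_snoc: "reduced (w @ [a]) \<longleftrightarrow> reduced w \<and> (w \<noteq> [] \<longrightarrow> a \<noteq> inv_letter (last w))"
proof (induct w rule: reduced.induct)
  case (3 x y ys) then show ?case by (cases ys) auto
qed auto

lemma reduced_rev: "reduced (rev w) = reduced w"
proof (induct w rule: reduced.induct)
  case (3 x y ys)
  have "reduced (rev ys @ [y, x]) = (reduced (rev ys @ [y]) \<and> x \<noteq> inv_letter y)"
    by (rule reduced_append_single)
  then show ?case using 3 by (auto simp: inv_letter_def)
qed simp_all

lemma reduced_inv: "reduced (inv_word w) = reduced w"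
  unfolding inv_word_def
  by (simp add: reduced_rev reduced_map[where h = inv_letter] inj_def inv_letter_def)

lemma reduced_conj: "reduced (fst k) \<Longrightarrow> reduced (snd k) \<Longrightarrow> reduced (fst (conj x y k)) \<and> reduced (snd (conj x y k))"
  by (simp add: conj_def reduced_fl reduced_inv)

lemma qswap_simp[simp]: "qswap (A, B, C, D) = (swap_letters D, swap_letters C, swap_letters B, swap_letters A)"
  by (simp add: qswap_def)
lemma qback_simp[simp]: "qback (A, B, C, D) = (rev A, rev B, rev C, rev D)"
  by (simp add: qback_def)

definition bbx :: "endo2 \<Rightarrow> bool \<Rightarrow> endo2" where "bbx b f = (if f then b else thh b)"

definition quadof :: "endo2 \<Rightarrow> endo2 \<Rightarrow> quad" where "quadof P Q = (fst P, snd P, fst Q, snd Q)"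

definition Good :: "endo2 \<Rightarrow> quad \<Rightarrow> bool" where
  "Good b q \<longleftrightarrow> (\<exists>f e s s'. q = quadof (conj e s (bbx b f)) (conj s s' (bbx b f)))"

definition okb :: "endo2 \<Rightarrow> bool" where
  "okb b \<longleftrightarrow> over2 b \<and> is_inverse2 b (thh b) \<and> reduced (fst b) \<and> reduced (snd b) \<and>
       reduced (fst (thh b)) \<and> reduced (snd (thh b))"

lemma okb_over: "okb b \<Longrightarrow> over2 (bbx b f)"
  by (auto simp: okb_def bbx_def over2_thh)

lemma okb_inv: "okb b \<Longrightarrow> is_inverse2 (bbx b f) (bbx b (\<not> f))"
  by (auto simp: okb_def bbx_def thh_thh intro: is_inverse2_sym over2_thh)

lemma okb_red: "okb b \<Longrightarrow> reduced (fst (bbx b f)) \<and> reduced (snd (bbx b f))"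
  by (auto simp: okb_def bbx_def)

lemma Good_swap: "okb b \<Longrightarrow> Good b q \<Longrightarrow> Good b (qswap q)"
proof -
  assume ok: "okb b" and "Good b q"
  then obtain f e s s' where q: "q = quadof (conj e s (bbx b f)) (conj s s' (bbx b f))" by (auto simp: Good_def)
  have o: "over2 b" using ok by (simp add: okb_def)
  have sb: "swapP (bbx b f) = conj False False (bbx b (\<not> f))"
    using o by (cases f) (simp_all add: bbx_def swapP_b swapP_thh)
  have "qswap q = quadof (swapP (conj s s' (bbx b f))) (swapP (conj e s (bbx b f)))"
    by (simp add: q quadof_def swapP_def qswap_def case_prod_unfold)
  also have "\<dots> = quadof (conj (\<not> s') (\<not> s) (bbx b (\<not> f))) (conj (\<not> s) (\<not> e) (bbx b (\<not> f)))"
    by (simp add: swapP_conj sb conj_conj)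
  finally show ?thesis unfolding Good_def by blast
qed

lemma Good_back: "okb b \<Longrightarrow> Good b q \<Longrightarrow> Good b (qback q)"
proof -
  assume ok: "okb b" and "Good b q"
  then obtain f e s s' where q: "q = quadof (conj e s (bbx b f)) (conj s s' (bbx b f))" by (auto simp: Good_def)
  have "qback q = quadof (backP (conj e s (bbx b f))) (backP (conj s s' (bbx b f)))"
    by (simp add: q quadof_def backP_def qback_def case_prod_unfold)
  also have "\<dots> = quadof (conj (\<not> e) (\<not> s) (bbx b f)) (conj (\<not> s) (\<not> s') (bbx b f))"
    by (simp add: backP_conj backP_conjFF conj_conj)
  finally show ?thesis unfolding Good_def by blast
qed

lemma inv2_conj_red:
  assumes ok: "okb b" and a: "is_aut2 (conj e s (bbx b f))"
  shows "reduce (fst (inv2 (conj e s (bbx b f)))) = fst (conj e s (bbx b (\<not> f)))"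
    and "reduce (snd (inv2 (conj e s (bbx b f)))) = snd (conj e s (bbx b (\<not> f)))"
proof -
  have o: "over2 (conj e s (bbx b f))" by (rule over2_conj[OF okb_over[OF ok]])
  have i1: "is_inverse2 (conj e s (bbx b f)) (inv2 (conj e s (bbx b f)))" by (rule inv2_prop[OF a])
  have i2: "is_inverse2 (conj e s (bbx b f)) (conj e s (bbx b (\<not> f)))"
    by (rule is_inverse2_conj[OF okb_inv[OF ok] okb_over[OF ok]])
  have r: "reduced (fst (conj e s (bbx b (\<not> f)))) \<and> reduced (snd (conj e s (bbx b (\<not> f))))"
    using okb_red[OF ok] by (intro reduced_conj) auto
  show "reduce (fst (inv2 (conj e s (bbx b f)))) = fst (conj e s (bbx b (\<not> f)))"
    using inverse_unique[OF i1 i2 o] r by (simp add: reduce_reduced)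
  show "reduce (snd (inv2 (conj e s (bbx b f)))) = snd (conj e s (bbx b (\<not> f)))"
    using inverse_unique[OF i1 i2 o] r by (simp add: reduce_reduced)
qed

lemma Good_inv: "okb b \<Longrightarrow> Good b (A, B, C, D) \<Longrightarrow> is_aut2 (A, B) \<Longrightarrow> is_aut2 (C, D) \<Longrightarrow> Good b (qinv (A, B, C, D))"
proof -
  assume ok: "okb b" and "Good b (A, B, C, D)" and a1: "is_aut2 (A, B)" and a2: "is_aut2 (C, D)"
  then obtain f e s s' where q: "(A, B, C, D) = quadof (conj e s (bbx b f)) (conj s s' (bbx b f))" by (auto simp: Good_def)
  then have AB: "(A, B) = conj e s (bbx b f)" and CD: "(C, D) = conj s s' (bbx b f)"
    by (auto simp: quadof_def prod_eq_iff)
  have "qinv (A, B, C, D) = quadof (conj e s (bbx b (\<not> f))) (conj s s' (bbx b (\<not> f)))"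
    using inv2_conj_red[OF ok a1[unfolded AB]] inv2_conj_red[OF ok a2[unfolded CD]]
    by (simp add: qinv_def quadof_def AB CD)
  then show ?thesis unfolding Good_def by blast
qed

lemma sym_equiv_Good: "sym_equiv q x \<Longrightarrow> okb b \<Longrightarrow> Good b q \<Longrightarrow> Good b x"
proof (induct rule: sym_equiv.induct)
  case (sym_base q) then show ?case by simp
next
  case (sym_inv q A B C D) then show ?case using Good_inv by blast
next
  case (sym_swap q q') then show ?case using Good_swap by blast
next
  case (sym_back q q') then show ?case using Good_back by blast
qed


lemma inv_letter_neq2[simp]: "x \<noteq> inv_letter x" by (cases x) (simp add: inv_letter_def)

lemma ex_bool: "(\<exists>x::bool. P x) \<longleftrightarrow> P True \<or> P False" by (metis (full_types))

definition bD :: endo2 where "bD = (lA @ lB @ la, lb @ lb @ la)"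

lemma thh_bD: "thh bD = ([(1,True),(0,True),(0,True)], [(1,True),(0,False),(1,False)])"
  by (simp add: bD_def thh_def th_def inv_word_def)

lemma okb_bD: "okb bD"
  unfolding okb_def thh_bD
  by (simp add: bD_def over2_def is_inverse2_def endo2_fun_def reduce_Cons rstep_def)

lemma transfer_D: "conj s s2 (bbx bD f) = conj t t' (bbx bD f') \<Longrightarrow> \<exists>s3. conj t' t'' (bbx bD f') = conj s2 s3 (bbx bD f)"
  unfolding ex_bool bbx_def thh_bD
  by (cases f; cases f'; cases s; cases s2; cases t; cases t'; cases t'') (simp_all add: bD_def conj_def fl_def)

lemma listed_D: "q \<in> listed TD \<Longrightarrow> Good bD q"
  unfolding Good_def quadof_def bbx_def thh_bD
  by (auto simp: bD_def conj_def fl_def ex_bool)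

definition bC :: endo2 where "bC = (la @ lB @ la, la)"

lemma thh_bC: "thh bC = ([(1,True)], [(1,True),(0,False),(1,True)])"
  by (simp add: bC_def thh_def th_def inv_word_def)

lemma okb_bC: "okb bC"
  unfolding okb_def thh_bC
  by (simp add: bC_def over2_def is_inverse2_def endo2_fun_def reduce_Cons rstep_def)

lemma transfer_C: "conj s s2 (bbx bC f) = conj t t' (bbx bC f') \<Longrightarrow> \<exists>s3. conj t' t'' (bbx bC f') = conj s2 s3 (bbx bC f)"
  unfolding ex_bool bbx_def thh_bC
  by (cases f; cases f'; cases s; cases s2; cases t; cases t'; cases t'') (simp_all add: bC_def conj_def fl_def)

lemma listed_C: "q \<in> listed TC \<Longrightarrow> Good bC q"
  unfolding Good_def quadof_def bbx_def thh_bC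
  by (auto simp: bC_def conj_def fl_def ex_bool)

definition bB :: endo2 where "bB = (lB, la)"

lemma thh_bB: "thh bB = ([(1,True)], [(0,False)])"
  by (simp add: bB_def thh_def th_def inv_word_def)

lemma okb_bB: "okb bB"
  unfolding okb_def thh_bB
  by (simp add: bB_def over2_def is_inverse2_def endo2_fun_def reduce_Cons rstep_def)

lemma transfer_B: "conj s s2 (bbx bB f) = conj t t' (bbx bB f') \<Longrightarrow> \<exists>s3. conj t' t'' (bbx bB f') = conj s2 s3 (bbx bB f)"
  unfolding ex_bool bbx_def thh_bB
  by (cases f; cases f'; cases s; cases s2; cases t; cases t'; cases t'') (simp_all add: bB_def conj_def fl_def)

lemma listed_B: "q \<in> listed TB \<Longrightarrow> Good bB q"
  unfolding Good_def quadof_def bbx_def thh_bB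
  by (auto simp: bB_def conj_def fl_def ex_bool)

definition bA :: "nat \<Rightarrow> endo2" where "bA r = (apow r @ lb @ aneg r, la)"

lemma thh_bA: "thh (bA r) = ([(1,True)], replicate r (1,False) @ [(0,True)] @ replicate r (1,True))"
  by (simp add: bA_def apow_def aneg_def thh_def th_def inv_word_def rev_map map_replicate)

lemma reduced_Cons': "reduced (x # v) \<longleftrightarrow> reduced v \<and> (v \<noteq> [] \<longrightarrow> hd v \<noteq> inv_letter x)"
  by (cases v) auto

lemma reduced_repl: "reduced w \<Longrightarrow> (w \<noteq> [] \<longrightarrow> hd w \<noteq> inv_letter x) \<Longrightarrow> reduced (replicate r x @ w)"
proof (induct r)
  case (Suc r)
  then show ?case by (cases r) (auto simp: reduced_Cons')
qed simp

lemma reduced_repl0: "reduced (replicate r x)"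
  using reduced_repl[of "[]" x r] by simp

lemma concat_repl: "concat (replicate r [x]) = replicate r x"
  by (induct r) auto

lemma okb_bA: "okb (bA r)"
proof -
  have ov: "over2 (bA r)" by (simp add: over2_def bA_def apow_def aneg_def)
  have r1: "reduced (fst (bA r))"
    unfolding bA_def apow_def aneg_def fst_conv
    by (rule reduced_repl) (auto simp: reduced_Cons' reduced_repl0)
  have r2: "reduced (snd (thh (bA r)))"
    unfolding thh_bA snd_conv
    by (rule reduced_repl) (auto simp: reduced_Cons' reduced_repl0)
  have inv: "is_inverse2 (bA r) (thh (bA r))"
    unfolding is_inverse2_def
  proof (intro conjI ballI)
    show "word_over {0, 1} (fst (thh (bA r)))" "word_over {0, 1} (snd (thh (bA r)))"
      by (simp_all add: thh_bA)
    fix k :: nat assume k: "k \<in> {0,1}"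
    show "reduce (subst (endo2_fun (thh (bA r))) (endo2_fun (bA r) k)) = [(k, True)]"
    proof (cases "k = 0")
      case True
      have "subst (endo2_fun (thh (bA r))) (endo2_fun (bA r) k) =
            [] @ replicate r (1, True) @ replicate r (inv_letter (1, True)) @ ([(0, True)] @ replicate r (1, True) @ replicate r (inv_letter (1, True)) @ [])"
        using True unfolding thh_bA by (simp add: bA_def apow_def aneg_def endo2_fun_def concat_repl)
      also have "reduce \<dots> = reduce ([(0, True)] @ replicate r (1, True) @ replicate r (inv_letter (1, True)) @ [])"
        using fe_replicate_cancel[of "[]" r "(1, True)"] by simp
      also have "\<dots> = [(k, True)]" using fe_replicate_cancel[of "[(0, True)]" r "(1, True)" "[]"] True by simp
      finally show ?thesis .
    next
      case False
      then have "k = 1" using k by simp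
      then show ?thesis unfolding thh_bA by (simp add: bA_def endo2_fun_def)
    qed
    show "reduce (subst (endo2_fun (bA r)) (endo2_fun (thh (bA r)) k)) = [(k, True)]"
    proof (cases "k = 0")
      case True
      then show ?thesis unfolding thh_bA by (simp add: bA_def endo2_fun_def apow_def aneg_def)
    next
      case False
      then have k1: "k = 1" using k by simp
      have "subst (endo2_fun (bA r)) (endo2_fun (thh (bA r)) k) =
            [] @ replicate r (0, False) @ replicate r (inv_letter (0, False)) @ ([(1, True)] @ replicate r (0, False) @ replicate r (inv_letter (0, False)) @ [])"
        using k1 unfolding thh_bA by (simp add: bA_def apow_def aneg_def endo2_fun_def concat_repl)
      also have "reduce \<dots> = reduce ([(1, True)] @ replicate r (0, False) @ replicate r (inv_letter (0, False)) @ [])"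
        using fe_replicate_cancel[of "[]" r "(0, False)"] by simp
      also have "\<dots> = [(k, True)]" using fe_replicate_cancel[of "[(1, True)]" r "(0, False)" "[]"] k1 by simp
      finally show ?thesis .
    qed
  qed
  have r3: "reduced (fst (thh (bA r)))" unfolding thh_bA by simp
  have r4: "reduced (snd (bA r))" by (simp add: bA_def)
  show ?thesis unfolding okb_def using ov inv r1 r2 r3 r4 by blast
qed

lemma transfer_A: "conj s s2 (bbx (bA r) f) = conj t t' (bbx (bA r) f') \<Longrightarrow> \<exists>s3. conj t' t'' (bbx (bA r) f') = conj s2 s3 (bbx (bA r) f)"
  unfolding ex_bool bbx_def thh_bA
  by (cases r; cases f; cases f'; cases s; cases s2; cases t; cases t'; cases t'')
     (simp_all add: bA_def apow_def aneg_def conj_def fl_def inv_word_def rev_map map_replicate replicate_app_Cons_same)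

lemma listed_A: "q \<in> listed (TA r) \<Longrightarrow> Good (bA r) q"
proof -
  have g: "Good (bA r) (quadof (conj e s (bbx (bA r) True)) (conj s s' (bbx (bA r) True)))" for e s s'
    unfolding Good_def by blast
  assume "q \<in> listed (TA r)"
  then consider "q = quadof (conj True True (bbx (bA r) True)) (conj True True (bbx (bA r) True))"
    | "q = quadof (conj True True (bbx (bA r) True)) (conj True False (bbx (bA r) True))"
    | "q = quadof (conj True False (bbx (bA r) True)) (conj False True (bbx (bA r) True))"
    by (auto simp: quadof_def bbx_def bA_def apow_def aneg_def conj_def fl_def inv_word_def rev_map map_replicate)
  then show ?thesis using g by cases auto
qed


definition lab :: "endo2 \<Rightarrow> bool \<Rightarrow> endo2 \<Rightarrow> bool \<Rightarrow> bool \<Rightarrow> bool" where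
  "lab b f \<kappa> e s \<longleftrightarrow> (reduce (fst \<kappa>), reduce (snd \<kappa>)) = conj e s (bbx b f)"

lemma chain:
  assumes tr: "\<forall>s s2 t t' t'' f f'. conj s s2 (bbx b f) = conj t t' (bbx b f') \<longrightarrow> (\<exists>s3. conj t' t'' (bbx b f') = conj s2 s3 (bbx b f))"
    and q: "\<forall>i\<ge>1. \<exists>f e s s'. lab b f (\<tau> i) e s \<and> lab b f (\<tau> (Suc i)) s s'"
  shows "\<exists>F \<epsilon>. \<forall>i\<ge>1. lab b F (\<tau> i) (\<epsilon> i) (\<epsilon> (Suc i))"
proof -
  obtain F e0 s0 s0' where q1: "lab b F (\<tau> 1) e0 s0" using q by auto
  define eps where "eps = rec_nat e0 (\<lambda>k e. SOME s. lab b F (\<tau> (Suc k)) e s)"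
  have eps0: "eps 0 = e0" by (simp add: eps_def)
  have epsS: "eps (Suc k) = (SOME s. lab b F (\<tau> (Suc k)) (eps k) s)" for k by (simp add: eps_def)
  have claim: "\<exists>s. lab b F (\<tau> (Suc m)) (eps m) s" for m
  proof (induct m)
    case 0 then show ?case using q1 eps0 by auto
  next
    case (Suc m)
    have l1: "lab b F (\<tau> (Suc m)) (eps m) (eps (Suc m))"
      unfolding epsS using Suc by (rule someI_ex)
    obtain f e s s' where l2: "lab b f (\<tau> (Suc m)) e s" and l3: "lab b f (\<tau> (Suc (Suc m))) s s'"
      using q[rule_format, of "Suc m"] by auto
    have "conj (eps m) (eps (Suc m)) (bbx b F) = conj e s (bbx b f)" using l1 l2 by (simp add: lab_def)
    then obtain s3 where "conj s s' (bbx b f) = conj (eps (Suc m)) s3 (bbx b F)" using tr by metis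
    then have "lab b F (\<tau> (Suc (Suc m))) (eps (Suc m)) s3" using l3 by (simp add: lab_def)
    then show ?case by blast
  qed
  have "\<forall>i\<ge>1. lab b F (\<tau> i) (eps (i - 1)) (eps (Suc i - 1))"
  proof (intro allI impI)
    fix i :: nat assume "1 \<le> i"
    then obtain m where i: "i = Suc m" by (cases i) auto
    have "lab b F (\<tau> (Suc m)) (eps m) (eps (Suc m))"
      unfolding epsS using claim[of m] by (rule someI_ex)
    then show "lab b F (\<tau> i) (eps (i - 1)) (eps (Suc i - 1))" using i by simp
  qed
  then show ?thesis
    by (intro exI[where x = F] exI[where x = "\<lambda>i. eps (i - 1)"]) simp
qed

lemma okb_aut: "okb b \<Longrightarrow> is_aut2 (bbx b f)"
  using okb_inv[of b f] okb_over[of b f] unfolding is_aut2_def over2_def by blast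

lemma sign_flip_iso:
  assumes ok: "okb b"
    and l: "\<forall>i\<in>{1..<n}. lab b f (\<tau> i) (\<epsilon> i) (\<epsilon> (Suc i))"
    and aut: "\<forall>i\<in>{1..<n}. is_aut2 (\<tau> i)"
    and bw: "braid_word n \<beta>"
  shows "G_Theta \<tau> n \<beta> \<cong> G_Theta (\<lambda>_. bbx b f) n \<beta> \<and> G_Theta (\<lambda>_. bbx b f) n \<beta> \<cong> G_Theta \<tau> n \<beta>"
proof -
  have pi: "\<forall>i\<in>{1..<n}. (\<lambda>i. i) i \<in> {1..<n}" by simp
  have autc: "\<forall>i\<in>{1..<n}. is_aut2 ((\<lambda>_. bbx b f) i)" using okb_aut[OF ok] by simp
  have gen: "\<forall>i\<in>{1..<n}. EE n (Tloc ((\<lambda>i. i) i) (\<tau> ((\<lambda>i. i) i))) (rcomp (rcomp (Cf \<epsilon>) (Tloc i ((\<lambda>_. bbx b f) i))) (Cf \<epsilon>))"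
  proof
    fix i assume i: "i \<in> {1..<n}"
    have li: "(reduce (fst (\<tau> i)), reduce (snd (\<tau> i))) = conj (\<epsilon> i) (\<epsilon> (Suc i)) (bbx b f)"
      using l i by (simp add: lab_def)
    have "reduce (fst (conj (\<epsilon> i) (\<epsilon> (Suc i)) (bbx b f))) = reduce (fst (\<tau> i))"
      "reduce (snd (conj (\<epsilon> i) (\<epsilon> (Suc i)) (bbx b f))) = reduce (snd (\<tau> i))"
      using li[symmetric] by (auto simp: prod_eq_iff)
    then have "EE n (Tloc i (\<tau> i)) (Tloc i (conj (\<epsilon> i) (\<epsilon> (Suc i)) (bbx b f)))"
      by (intro Tloc_cong) simp_all
    then show "EE n (Tloc ((\<lambda>i. i) i) (\<tau> ((\<lambda>i. i) i))) (rcomp (rcomp (Cf \<epsilon>) (Tloc i ((\<lambda>_. bbx b f) i))) (Cf \<epsilon>))"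
      by (simp add: Cf_conj[OF okb_over[OF ok]])
  qed
  have m: "map (\<lambda>s. ((\<lambda>i. i) (fst s), snd s)) \<beta> = \<beta>" by simp
  show ?thesis
    using G_conj[where \<pi> = "\<lambda>i. i" and \<tau> = "\<lambda>_. bbx b f" and \<tau>' = \<tau>, OF ov_Cf ov_Cf _ _ pi autc aut gen bw]
    unfolding m by simp
qed

lemma D_iso:
  assumes ok: "okb b" and bw: "braid_word n \<beta>"
  shows "G_Theta (\<lambda>_. bbx b False) n \<beta> \<cong> G_Theta (\<lambda>_. bbx b True) n (map (\<lambda>s. (n - fst s, snd s)) \<beta>)
       \<and> G_Theta (\<lambda>_. bbx b True) n (map (\<lambda>s. (n - fst s, snd s)) \<beta>) \<cong> G_Theta (\<lambda>_. bbx b False) n \<beta>"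
proof -
  have pi: "\<forall>i\<in>{1..<n}. (\<lambda>i. n - i) i \<in> {1..<n}" by auto
  have a1: "\<forall>i\<in>{1..<n}. is_aut2 ((\<lambda>_. bbx b False) i)" and a2: "\<forall>i\<in>{1..<n}. is_aut2 ((\<lambda>_. bbx b True) i)"
    using okb_aut[OF ok] by simp_all
  have o: "over2 b" using ok by (simp add: okb_def)
  have gen: "\<forall>i\<in>{1..<n}. EE n (Tloc ((\<lambda>i. n - i) i) ((\<lambda>_. bbx b True) ((\<lambda>i. n - i) i))) (rcomp (rcomp (Df n) (Tloc i ((\<lambda>_. bbx b False) i))) (Df n))"
  proof
    fix i assume i: "i \<in> {1..<n}"
    have "EE n (rcomp (rcomp (Df n) (Tloc i (bbx b False))) (Df n)) (Tloc (n - i) (thh (bbx b False)))"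
      using i by (intro Df_conj okb_over[OF ok]) auto
    then show "EE n (Tloc ((\<lambda>i. n - i) i) ((\<lambda>_. bbx b True) ((\<lambda>i. n - i) i))) (rcomp (rcomp (Df n) (Tloc i ((\<lambda>_. bbx b False) i))) (Df n))"
      using o by (simp add: bbx_def thh_thh EE_sym)
  qed
  show ?thesis
    using G_conj[where \<pi> = "\<lambda>i. n - i" and \<tau> = "\<lambda>_. bbx b False" and \<tau>' = "\<lambda>_. bbx b True",
        OF ov_Df ov_Df Df_Df Df_Df pi a1 a2 gen bw] by simp
qed

lemma flip_flip: "braid_word n \<beta> \<Longrightarrow> map (\<lambda>s. (n - fst s, snd s)) (map (\<lambda>s. (n - fst s, snd s)) \<beta>) = \<beta>"
  by (induct \<beta>) (auto simp: braid_word_def)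

lemma bw_flip: "braid_word n \<beta> \<Longrightarrow> braid_word n (map (\<lambda>s. (n - fst s, snd s)) \<beta>)"
  by (auto simp: braid_word_def)

theorem main_generic:
  assumes ok: "okb b"
    and tr: "\<And>s s2 t t' t'' f f'. conj s s2 (bbx b f) = conj t t' (bbx b f') \<Longrightarrow> (\<exists>s3. conj t' t'' (bbx b f') = conj s2 s3 (bbx b f))"
    and lst: "\<And>q. q \<in> listed L \<Longrightarrow> Good b q"
    and lr: "local_rep_inf \<tau>" and ty: "of_type L \<tau>"
    and bw: "braid_word n \<beta>"
  shows "G_Theta \<tau> n \<beta> \<cong> G_Theta (\<lambda>_. b) n \<beta> \<and> G_Theta (\<lambda>_. b) n \<beta> \<cong> G_Theta \<tau> n \<beta>"
proof -
  have q: "\<forall>i\<ge>1. \<exists>f e s s'. lab b f (\<tau> i) e s \<and> lab b f (\<tau> (Suc i)) s s'"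
  proof (intro allI impI)
    fix i :: nat assume i: "1 \<le> i"
    obtain q where ql: "q \<in> listed L" and se: "sym_equiv q (reduce (fst (\<tau> i)), reduce (snd (\<tau> i)),
                   reduce (fst (\<tau> (i+1))), reduce (snd (\<tau> (i+1))))"
      using ty i unfolding of_type_def by blast
    have "Good b (reduce (fst (\<tau> i)), reduce (snd (\<tau> i)), reduce (fst (\<tau> (i+1))), reduce (snd (\<tau> (i+1))))"
      by (rule sym_equiv_Good[OF se ok lst[OF ql]])
    then show "\<exists>f e s s'. lab b f (\<tau> i) e s \<and> lab b f (\<tau> (Suc i)) s s'"
      by (auto simp: Good_def quadof_def lab_def prod_eq_iff)
  qed
  have trH: "\<forall>s s2 t t' t'' f f'. conj s s2 (bbx b f) = conj t t' (bbx b f') \<longrightarrow> (\<exists>s3. conj t' t'' (bbx b f') = conj s2 s3 (bbx b f))"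
    using tr by blast
  obtain F \<epsilon> where l: "\<forall>i\<ge>1. lab b F (\<tau> i) (\<epsilon> i) (\<epsilon> (Suc i))" using chain[OF trH q] by blast
  have lrn: "local_rep n \<tau>" using lr by (simp add: local_rep_inf_def)
  have aut: "\<forall>i\<in>{1..<n}. is_aut2 (\<tau> i)" using lrn by (simp add: local_rep_def)
  have ln: "\<forall>i\<in>{1..<n}. lab b F (\<tau> i) (\<epsilon> i) (\<epsilon> (Suc i))" using l by auto
  show ?thesis
  proof (cases F)
    case True
    then show ?thesis using sign_flip_iso[OF ok ln aut bw] by (simp add: bbx_def)
  next
    case False
    interpret lrep n \<tau> by (unfold_locales) (rule lrn)
    let ?fb = "map (\<lambda>s. (n - fst s, snd s)) \<beta>"
    have bw': "braid_word n ?fb" by (rule bw_flip[OF bw])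
    have s1: "G_Theta \<tau> n \<beta> \<cong> G_Theta \<tau> n ?fb" and s1': "G_Theta \<tau> n ?fb \<cong> G_Theta \<tau> n \<beta>"
      using G_flip[OF bw] by auto
    have s2: "G_Theta \<tau> n ?fb \<cong> G_Theta (\<lambda>_. bbx b False) n ?fb \<and> G_Theta (\<lambda>_. bbx b False) n ?fb \<cong> G_Theta \<tau> n ?fb"
      using sign_flip_iso[OF ok _ aut bw'] ln False by simp
    have s3: "G_Theta (\<lambda>_. bbx b False) n ?fb \<cong> G_Theta (\<lambda>_. bbx b True) n \<beta> \<and> G_Theta (\<lambda>_. bbx b True) n \<beta> \<cong> G_Theta (\<lambda>_. bbx b False) n ?fb"
      using D_iso[OF ok bw'] flip_flip[OF bw] by simp
    have bt: "bbx b True = b" by (simp add: bbx_def)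
    show ?thesis using s1 s1' s2 s3 unfolding bt by (meson iso_trans)
  qed
qed


fun bL :: "ltype \<Rightarrow> endo2" where
  "bL (TA r) = bA r"
| "bL TB = bB"
| "bL TC = bC"
| "bL TD = bD"

lemma main_L:
  assumes lr: "local_rep_inf \<tau>" and ty: "of_type L \<tau>" and bw: "braid_word n \<beta>"
  shows "G_Theta \<tau> n \<beta> \<cong> G_Theta (\<lambda>_. bL L) n \<beta> \<and> G_Theta (\<lambda>_. bL L) n \<beta> \<cong> G_Theta \<tau> n \<beta>"
proof (cases L)
  case (TA r)
  show ?thesis unfolding TA bL.simps
    by (rule main_generic[OF okb_bA transfer_A listed_A lr ty[unfolded TA] bw])
next
  case TB
  show ?thesis unfolding TB bL.simps
    by (rule main_generic[OF okb_bB transfer_B listed_B lr ty[unfolded TB] bw])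
next
  case TC
  show ?thesis unfolding TC bL.simps
    by (rule main_generic[OF okb_bC transfer_C listed_C lr ty[unfolded TC] bw])
next
  case TD
  show ?thesis unfolding TD bL.simps
    by (rule main_generic[OF okb_bD transfer_D listed_D lr ty[unfolded TD] bw])
qed

theorem theorem4p5:
  fixes \<tau> \<tau>' :: "nat \<Rightarrow> endo2" and L :: ltype
  assumes "local_rep_inf \<tau>" and "local_rep_inf \<tau>'"
    and "of_type L \<tau>" and "of_type L \<tau>'"
  shows "(\<forall>n \<beta>. n \<ge> 1 \<longrightarrow> braid_word n \<beta> \<longrightarrow> G_Theta \<tau> n \<beta> \<cong> G_Theta \<tau>' n \<beta>)
     \<and> (\<forall>t. local_rep_inf (\<lambda>_. t) \<longrightarrow> of_type L (\<lambda>_. t) \<longrightarrow>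
          (\<forall>n \<beta>. n \<ge> 1 \<longrightarrow> braid_word n \<beta> \<longrightarrow> G_Theta \<tau> n \<beta> \<cong> G_Theta (\<lambda>_. t) n \<beta>))"
proof (intro conjI allI impI)
  fix n :: nat and \<beta> assume bw: "braid_word n \<beta>"
  have a: "G_Theta \<tau> n \<beta> \<cong> G_Theta (\<lambda>_. bL L) n \<beta>" using main_L[OF assms(1) assms(3) bw] by blast
  have b: "G_Theta (\<lambda>_. bL L) n \<beta> \<cong> G_Theta \<tau>' n \<beta>" using main_L[OF assms(2) assms(4) bw] by blast
  show "G_Theta \<tau> n \<beta> \<cong> G_Theta \<tau>' n \<beta>" by (rule iso_trans[OF a b])
next
  fix t :: endo2 and n :: nat and \<beta>
  assume lt: "local_rep_inf (\<lambda>_. t)" and tt: "of_type L (\<lambda>_. t)" and bw: "braid_word n \<beta>"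
  have a: "G_Theta \<tau> n \<beta> \<cong> G_Theta (\<lambda>_. bL L) n \<beta>" using main_L[OF assms(1) assms(3) bw] by blast
  have b: "G_Theta (\<lambda>_. bL L) n \<beta> \<cong> G_Theta (\<lambda>_. t) n \<beta>" using main_L[OF lt tt bw] by blast
  show "G_Theta \<tau> n \<beta> \<cong> G_Theta (\<lambda>_. t) n \<beta>" by (rule iso_trans[OF a b])
qed

end
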